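(* Suppose $d\ge2$, $\gamma\ge100/101$ and $T\ge45(d-1)^2/(1-\gamma)$. Then for any policy $\pi$ there exists an MDP $M_\theta$ of the family below (with $\delta=1-\gamma$) such that $L_\theta\le100/99$, $L_\varphi\le1+\log(\gamma/(1-\gamma))$, and $\mathbb E[\mathrm{Regret}(M_\theta,\pi,x_0,T)]\ge\frac{\gamma}{3375(1-\gamma)^{3/2}}d\sqrt T-\frac{\gamma}{(1-\gamma)^2}$, where the expectation is over the randomness of $M_\theta$ and $\pi$.
   Context: Family $M_\theta$: two states $x_0,x_1$; actions $\mathcal A=\{-1,1\}^{d-1}$; rewards $r(x_0,a)=0$, $r(x_1,a)=1$. Parameters: $\delta=1-\gamma$, $\Delta=(d-1)/(45\sqrt{(2/5)(T/\delta)\log2})$, $\bar\Delta=\log\frac{(1-\delta)(\delta+\Delta)}{\delta(1-\delta-\Delta)}$, $\alpha=\sqrt{\bar\Delta/((d-1)(1+\bar\Delta))}$, $\beta=\sqrt{1/(1+\bar\Delta)}$. Features: $\varphi(x_0,a,x_0)=(-\alpha a,\beta\log(\delta^{-1}-1))$, $\varphi(x_0,a,x_1)=\varphi(x_1,a,x_0)=(0,0)$, $\varphi(x_1,a,x_1)=(0,\beta\log(\delta^{-1}-1))$. For $\theta\in\{-\bar\Delta/(d-1),\bar\Delta/(d-1)\}^{d-1}$, $\bar\theta=(\theta/\alpha,1/\beta)$ and $p(x_j\mid x_i,a)=\exp(\varphi(x_i,a,x_j)^\top\bar\theta)/\sum_{j'\in\{0,1\}}\exp(\varphi(x_i,a,x_{j'})^\top\bar\theta)$,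 so $p(x_1\mid x_0,a)=1/(1+(\delta^{-1}-1)e^{-a^\top\theta})$, $p(x_0\mid x_1,a)=\delta$. $L_\theta=\|\bar\theta\|_2$, $L_\varphi=\max\|\varphi\|_2$. Discounted criterion with factor $\gamma$: for a (history-dependent) policy $\pi$, $V^\pi_t(s)=\mathbb E[\sum_{i\ge0}\gamma^ir(s_{t+i},a_{t+i})\mid s_t=s]$, $V^*$ the optimal value function, and with $s_1=x_0$, $\mathrm{Regret}(M_\theta,\pi,x_0,T)=\sum_{t=1}^TV^*(s_t)-\sum_{t=1}^TV^\pi_t(s_t)$. *)

theory Defs
  imports "HOL-Probability.Probability"
begin

text \<open>States: False = x0, True = x1. Actions: vectors in {-1,1}^(d-1), represented as
  functions nat => real supported on {0..<d-1}. Vectors in R^d: functions nat => real, only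
  indices < d are relevant.\<close>

type_synonym action = "nat \<Rightarrow> real"
type_synonym state = bool
type_synonym history = "(state \<times> action) list"
type_synonym policy = "history \<Rightarrow> state \<Rightarrow> action pmf"

definition actions :: "nat \<Rightarrow> action set" where
  "actions d = {a. (\<forall>i<d-1. a i \<in> {-1, 1}) \<and> (\<forall>i\<ge>d-1. a i = 0)}"

definition reward :: "state \<Rightarrow> action \<Rightarrow> real" where
  "reward s a = (if s then 1 else 0)"

definition vinner :: "nat \<Rightarrow> (nat \<Rightarrow> real) \<Rightarrow> (nat \<Rightarrow> real) \<Rightarrow> real" where
  "vinner d u v = (\<Sum>i<d. u i * v i)"

definition vnorm :: "nat \<Rightarrow> (nat \<Rightarrow> real) \<Rightarrow> real" where
  "vnorm d u = sqrt (\<Sum>i<d. (u i)\<^sup>2)"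

definition Delta :: "nat \<Rightarrow> real \<Rightarrow> nat \<Rightarrow> real" where
  "Delta d \<gamma> T = (real d - 1) / (45 * sqrt ((2/5) * (real T / (1 - \<gamma>)) * ln 2))"

definition Deltabar :: "nat \<Rightarrow> real \<Rightarrow> nat \<Rightarrow> real" where
  "Deltabar d \<gamma> T = (let \<delta> = 1 - \<gamma>; \<Delta> = Delta d \<gamma> T in
     ln (((1 - \<delta>) * (\<delta> + \<Delta>)) / (\<delta> * (1 - \<delta> - \<Delta>))))"

definition alpha :: "nat \<Rightarrow> real \<Rightarrow> nat \<Rightarrow> real" where
  "alpha d \<gamma> T = sqrt (Deltabar d \<gamma> T / ((real d - 1) * (1 + Deltabar d \<gamma> T)))"

definition beta :: "nat \<Rightarrow> real \<Rightarrow> nat \<Rightarrow> real" where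
  "beta d \<gamma> T = sqrt (1 / (1 + Deltabar d \<gamma> T))"

definition phi :: "nat \<Rightarrow> real \<Rightarrow> nat \<Rightarrow> state \<Rightarrow> action \<Rightarrow> state \<Rightarrow> (nat \<Rightarrow> real)" where
  "phi d \<gamma> T s a s' = (\<lambda>i.
     let \<delta> = 1 - \<gamma>; c = beta d \<gamma> T * ln (1/\<delta> - 1) in
     if \<not> s \<and> \<not> s' then (if i < d - 1 then - alpha d \<gamma> T * a i else if i = d - 1 then c else 0)
     else if s \<and> s' then (if i = d - 1 then c else 0)
     else 0)"

definition Theta :: "nat \<Rightarrow> real \<Rightarrow> nat \<Rightarrow> (nat \<Rightarrow> real) set" where
  "Theta d \<gamma> T = {\<theta>. (\<forall>i<d-1. \<theta> i \<in> {- Deltabar d \<gamma> T / (real d - 1), Deltabar d \<gamma> T / (real d - 1)})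
                      \<and> (\<forall>i\<ge>d-1. \<theta> i = 0)}"

definition thetabar :: "nat \<Rightarrow> real \<Rightarrow> nat \<Rightarrow> (nat \<Rightarrow> real) \<Rightarrow> (nat \<Rightarrow> real)" where
  "thetabar d \<gamma> T \<theta> = (\<lambda>i. if i < d - 1 then \<theta> i / alpha d \<gamma> T
                           else if i = d - 1 then 1 / beta d \<gamma> T else 0)"

text \<open>Transition kernel of M_theta: softmax over the two next states;
  the pmf gives the probability of moving to x1 (True).\<close>
definition trans_M :: "nat \<Rightarrow> real \<Rightarrow> nat \<Rightarrow> (nat \<Rightarrow> real) \<Rightarrow> state \<Rightarrow> action \<Rightarrow> state pmf" where
  "trans_M d \<gamma> T \<theta> s a = bernoulli_pmf
     (exp (vinner d (phi d \<gamma> T s a True) (thetabar d \<gamma> T \<theta>)) /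
      (exp (vinner d (phi d \<gamma> T s a False) (thetabar d \<gamma> T \<theta>))
       + exp (vinner d (phi d \<gamma> T s a True) (thetabar d \<gamma> T \<theta>))))"

definition Ltheta :: "nat \<Rightarrow> real \<Rightarrow> nat \<Rightarrow> (nat \<Rightarrow> real) \<Rightarrow> real" where
  "Ltheta d \<gamma> T \<theta> = vnorm d (thetabar d \<gamma> T \<theta>)"

definition Lphi :: "nat \<Rightarrow> real \<Rightarrow> nat \<Rightarrow> real" where
  "Lphi d \<gamma> T = Max ((\<lambda>(s, a, s'). vnorm d (phi d \<gamma> T s a s')) ` (UNIV \<times> actions d \<times> UNIV))"

definition valid_policy :: "nat \<Rightarrow> policy \<Rightarrow> bool" where
  "valid_policy d \<pi> \<longleftrightarrow> (\<forall>h s. set_pmf (\<pi> h s) \<subseteq> actions d)"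

primrec traj :: "policy \<Rightarrow> (state \<Rightarrow> action \<Rightarrow> state pmf) \<Rightarrow> nat \<Rightarrow> history \<Rightarrow> state
                  \<Rightarrow> history pmf" where
  "traj \<pi> K 0 h s = return_pmf []"
| "traj \<pi> K (Suc n) h s =
     bind_pmf (\<pi> h s) (\<lambda>a. bind_pmf (K s a) (\<lambda>s'.
       map_pmf (\<lambda>rest. (s, a) # rest) (traj \<pi> K n (h @ [(s, a)]) s')))"

definition Vpi :: "policy \<Rightarrow> (state \<Rightarrow> action \<Rightarrow> state pmf) \<Rightarrow> real \<Rightarrow> history \<Rightarrow> state \<Rightarrow> real" where
  "Vpi \<pi> K \<gamma> h s = lim (\<lambda>N. measure_pmf.expectation (traj \<pi> K N h s)
       (\<lambda>\<tau>. \<Sum>i<N. \<gamma> ^ i * reward (fst (\<tau> ! i)) (snd (\<tau> ! i))))"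

definition Vstar :: "nat \<Rightarrow> (state \<Rightarrow> action \<Rightarrow> state pmf) \<Rightarrow> real \<Rightarrow> state \<Rightarrow> real" where
  "Vstar d K \<gamma> s = (SUP \<pi>\<in>{\<pi>. valid_policy d \<pi>}. Vpi \<pi> K \<gamma> [] s)"

text \<open>Expected regret over T steps starting from s_1 = x0; index t (0-based) is time t+1,
  and V^pi_t(s_t) is the value conditional on the history up to time t.\<close>
definition expected_regret :: "nat \<Rightarrow> (state \<Rightarrow> action \<Rightarrow> state pmf) \<Rightarrow> real \<Rightarrow> policy \<Rightarrow> state \<Rightarrow> nat \<Rightarrow> real" where
  "expected_regret d K \<gamma> \<pi> x0 T = measure_pmf.expectation (traj \<pi> K T [] x0)
     (\<lambda>\<tau>. (\<Sum>t<T. Vstar d K \<gamma> (fst (\<tau> ! t))) - (\<Sum>t<T. Vpi \<pi> K \<gamma> (take t \<tau>) (fst (\<tau> ! t))))"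

end

theory Submission
  imports Defs
begin


abbreviation E :: "'a pmf \<Rightarrow> ('a \<Rightarrow> real) \<Rightarrow> real" where
  "E p f \<equiv> measure_pmf.expectation p f"

lemma finite_actions: "finite (actions d)"
proof -
  have "actions d \<subseteq> (\<lambda>f i. if i < d - 1 then f i else 0) ` (PiE {..<d-1} (\<lambda>_. {-1,1::real}))"
  proof
    fix a assume a: "a \<in> actions d"
    show "a \<in> (\<lambda>f i. if i < d - 1 then f i else 0) ` (PiE {..<d-1} (\<lambda>_. {-1,1::real}))"
    proof
      show "restrict a {..<d-1} \<in> PiE {..<d-1} (\<lambda>_. {-1,1::real})" using a by (auto simp: actions_def)
      show "a = (\<lambda>i. if i < d - 1 then restrict a {..<d-1} i else 0)" using a
        by (auto simp: actions_def fun_eq_iff)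
    qed
  qed
  moreover have "finite (PiE {..<d-1} (\<lambda>_. {-1,1::real}))" by (intro finite_PiE) auto
  ultimately show ?thesis using finite_subset by blast
qed

lemma valid_fin: "valid_policy d \<pi> \<Longrightarrow> finite (set_pmf (\<pi> h s))"
  using finite_actions finite_subset unfolding valid_policy_def by blast

lemma finite_traj:
  assumes "valid_policy d \<pi>"
  shows "finite (set_pmf (traj \<pi> K n h s))"
proof (induction n arbitrary: h s)
  case 0 then show ?case by simp
next
  case (Suc n)
  show ?case using valid_fin[OF assms] Suc by (auto simp: set_bind_pmf)
qed

lemma exp_bind_fin:
  assumes "finite (set_pmf p)" "\<And>x. x \<in> set_pmf p \<Longrightarrow> finite (set_pmf (f x))"
  shows "E (bind_pmf p f) h = E p (\<lambda>x. E (f x) h)"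
proof -
  have "E (bind_pmf p f) h = (\<Sum>a\<in>set_pmf p. pmf p a *\<^sub>R E (f a) h)"
    using assms by (intro pmf_expectation_bind) auto
  also have "\<dots> = E p (\<lambda>x. E (f x) h)"
    using assms by (subst integral_measure_pmf[of "set_pmf p"]) auto
  finally show ?thesis .
qed

lemma fin_bool: "finite (set_pmf (q :: bool pmf))" by simp

lemma traj_exp_Suc:
  assumes "valid_policy d \<pi>"
  shows "E (traj \<pi> K (Suc n) h s) f =
    E (\<pi> h s) (\<lambda>a. E (K s a) (\<lambda>s'. E (traj \<pi> K n (h@[(s,a)]) s') (\<lambda>r. f ((s,a)#r))))"
  apply (simp only: traj.simps)
  apply (subst exp_bind_fin)
    apply (rule valid_fin[OF assms])
   apply (auto simp: set_bind_pmf finite_traj[OF assms])[1]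
  apply (rule Bochner_Integration.integral_cong[OF refl])
  apply (subst exp_bind_fin)
    apply simp
   apply (simp add: finite_traj[OF assms])
  apply simp
  done

lemma traj_support:
  assumes "valid_policy d \<pi>" "\<tau> \<in> set_pmf (traj \<pi> K n h s)"
  shows "length \<tau> = n \<and> (\<forall>u<n. snd (\<tau>!u) \<in> actions d) \<and> (n > 0 \<longrightarrow> fst (\<tau>!0) = s)"
  using assms(2)
proof (induction n arbitrary: h s \<tau>)
  case 0 then show ?case by simp
next
  case (Suc n)
  then obtain a s' r where a: "a \<in> set_pmf (\<pi> h s)" and r: "r \<in> set_pmf (traj \<pi> K n (h@[(s,a)]) s')"
    and t: "\<tau> = (s,a)#r" by (auto simp: set_bind_pmf)
  have aa: "a \<in> actions d" using a assms(1) by (auto simp: valid_policy_def)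
  from Suc.IH[OF r] have "length r = n \<and> (\<forall>u<n. snd (r!u) \<in> actions d)" by blast
  then show ?case using aa t by (auto simp: nth_Cons split: nat.splits)
qed

lemma integ: "valid_policy d \<pi> \<Longrightarrow> integrable (measure_pmf (traj \<pi> K n h s)) (f :: _ \<Rightarrow> real)"
  by (rule integrable_measure_pmf_finite[OF finite_traj])

lemma integ_pol: "valid_policy d \<pi> \<Longrightarrow> integrable (measure_pmf (\<pi> h s)) (f :: _ \<Rightarrow> real)"
  by (rule integrable_measure_pmf_finite[OF valid_fin])

lemma integ_bool: "integrable (measure_pmf (q :: bool pmf)) (f :: _ \<Rightarrow> real)"
  by (rule integrable_measure_pmf_finite) simp


lemma E_lin: "integrable (measure_pmf p) f \<Longrightarrow> E p (\<lambda>x. c + k * f x) = c + k * E p f"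
  by (simp add: integral_add integral_mult_right)

lemma E_const: "E p (\<lambda>x. c) = c" by simp

definition rw :: "state \<Rightarrow> real" where "rw s = (if s then 1 else 0)"

lemma reward_rw: "reward s a = rw s" by (simp add: reward_def rw_def)

lemma sum_shift_rw:
  "(\<Sum>i<Suc N. \<gamma> ^ i * reward (fst (((s,a)#r) ! i)) (snd (((s,a)#r) ! i)))
   = rw s + \<gamma> * (\<Sum>i<N. \<gamma> ^ i * reward (fst (r ! i)) (snd (r ! i)))"
proof -
  have "(\<Sum>i<Suc N. \<gamma> ^ i * reward (fst (((s,a)#r) ! i)) (snd (((s,a)#r) ! i)))
     = rw s + (\<Sum>i<N. \<gamma> ^ Suc i * reward (fst (r ! i)) (snd (r ! i)))"
    by (simp only: sum.lessThan_Suc_shift) (simp add: reward_rw)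
  also have "\<dots> = rw s + \<gamma> * (\<Sum>i<N. \<gamma> ^ i * reward (fst (r ! i)) (snd (r ! i)))"
    by (simp add: sum_distrib_left mult.assoc)
  finally show ?thesis .
qed

definition J :: "policy \<Rightarrow> (state \<Rightarrow> action \<Rightarrow> state pmf) \<Rightarrow> real \<Rightarrow> nat \<Rightarrow> history \<Rightarrow> state \<Rightarrow> real" where
  "J \<pi> K \<gamma> N h s = E (traj \<pi> K N h s) (\<lambda>\<tau>. \<Sum>i<N. \<gamma> ^ i * reward (fst (\<tau> ! i)) (snd (\<tau> ! i)))"

lemma J_0: "J \<pi> K \<gamma> 0 h s = 0" by (simp add: J_def)

lemma J_Suc:
  assumes v: "valid_policy d \<pi>"
  shows "J \<pi> K \<gamma> (Suc N) h s = rw s + \<gamma> * E (\<pi> h s) (\<lambda>a. E (K s a) (\<lambda>s'. J \<pi> K \<gamma> N (h@[(s,a)]) s'))"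
proof -
  have "J \<pi> K \<gamma> (Suc N) h s = E (\<pi> h s) (\<lambda>a. E (K s a) (\<lambda>s'. rw s + \<gamma> * J \<pi> K \<gamma> N (h@[(s,a)]) s'))"
    unfolding J_def traj_exp_Suc[OF v]
    apply (rule Bochner_Integration.integral_cong[OF refl])
    apply (rule Bochner_Integration.integral_cong[OF refl])
    apply (subst E_lin[symmetric])
     apply (rule integ[OF v])
    apply (rule Bochner_Integration.integral_cong[OF refl])
    apply (rule sum_shift_rw)
    done
  also have "\<dots> = rw s + \<gamma> * E (\<pi> h s) (\<lambda>a. E (K s a) (\<lambda>s'. J \<pi> K \<gamma> N (h@[(s,a)]) s'))"
  proof -
    have "\<And>a. E (K s a) (\<lambda>s'. rw s + \<gamma> * J \<pi> K \<gamma> N (h@[(s,a)]) s') = rw s + \<gamma> * E (K s a) (\<lambda>s'. J \<pi> K \<gamma> N (h@[(s,a)]) s')"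
      by (rule E_lin[OF integ_bool])
    then show ?thesis by (simp only: E_lin[OF integ_pol[OF v]])
  qed
  finally show ?thesis .
qed

definition superh :: "nat \<Rightarrow> (state \<Rightarrow> action \<Rightarrow> state pmf) \<Rightarrow> real \<Rightarrow> (state \<Rightarrow> real) \<Rightarrow> bool" where
  "superh d K \<gamma> W \<longleftrightarrow> (\<forall>s. 0 \<le> W s) \<and> (\<forall>s a. a \<in> actions d \<longrightarrow> rw s + \<gamma> * E (K s a) W \<le> W s)"

lemma E_mono_pol:
  assumes v: "valid_policy d \<pi>" and "\<And>a. a \<in> actions d \<Longrightarrow> f a \<le> g a"
  shows "E (\<pi> h s) f \<le> E (\<pi> h s) g"
  apply (rule integral_mono_AE[OF integ_pol[OF v] integ_pol[OF v]])
  using assms by (auto simp: AE_measure_pmf_iff valid_policy_def)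

lemma E_mono_bool:
  assumes "\<And>s. f s \<le> g s"
  shows "E (q :: bool pmf) f \<le> E q g"
  by (rule integral_mono[OF integ_bool integ_bool]) (use assms in auto)

lemma E_pol_const_le:
  assumes v: "valid_policy d \<pi>" and "\<And>a. a \<in> actions d \<Longrightarrow> f a \<le> c"
  shows "E (\<pi> h s) f \<le> c"
  using E_mono_pol[OF v, of f "\<lambda>_. c"] assms by simp

lemma E_pol_const_ge:
  assumes v: "valid_policy d \<pi>" and "\<And>a. a \<in> actions d \<Longrightarrow> c \<le> f a"
  shows "c \<le> E (\<pi> h s) f"
  using E_mono_pol[OF v, of "\<lambda>_. c" f] assms by simp

lemma J_le_W:
  assumes v: "valid_policy d \<pi>" and W: "superh d K \<gamma> W" and g: "0 \<le> \<gamma>"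
  shows "J \<pi> K \<gamma> N h s \<le> W s"
proof (induction N arbitrary: h s)
  case 0 then show ?case using W by (simp add: J_0 superh_def)
next
  case (Suc N)
  have "J \<pi> K \<gamma> (Suc N) h s \<le> rw s + \<gamma> * E (\<pi> h s) (\<lambda>a. E (K s a) W)"
    unfolding J_Suc[OF v] using g
    by (intro add_left_mono mult_left_mono E_mono_pol[OF v] E_mono_bool Suc.IH) auto
  also have "\<dots> \<le> W s"
  proof -
    have "E (\<pi> h s) (\<lambda>a. rw s + \<gamma> * E (K s a) W) \<le> W s"
      by (rule E_pol_const_le[OF v]) (use W in \<open>auto simp: superh_def\<close>)
    then show ?thesis by (subst (asm) E_lin[OF integ_pol[OF v]])
  qed
  finally show ?case .
qed

lemma J_nonneg:
  assumes v: "valid_policy d \<pi>" and g: "0 \<le> \<gamma>"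
  shows "0 \<le> J \<pi> K \<gamma> N h s"
proof (induction N arbitrary: h s)
  case 0 then show ?case by (simp add: J_0)
next
  case (Suc N)
  have "0 \<le> E (\<pi> h s) (\<lambda>a. E (K s a) (\<lambda>s'. J \<pi> K \<gamma> N (h@[(s,a)]) s'))"
    by (intro integral_nonneg_AE AE_I2 Suc.IH)
  then show ?case unfolding J_Suc[OF v] using g by (simp add: rw_def)
qed

lemma J_mono:
  assumes v: "valid_policy d \<pi>" and g: "0 \<le> \<gamma>"
  shows "J \<pi> K \<gamma> N h s \<le> J \<pi> K \<gamma> (Suc N) h s"
proof (induction N arbitrary: h s)
  case 0 then show ?case using J_nonneg[OF v g] by (simp add: J_0)
next
  case (Suc N)
  have "J \<pi> K \<gamma> (Suc N) h s = rw s + \<gamma> * E (\<pi> h s) (\<lambda>a. E (K s a) (\<lambda>s'. J \<pi> K \<gamma> N (h@[(s,a)]) s'))"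
    by (rule J_Suc[OF v])
  also have "\<dots> \<le> rw s + \<gamma> * E (\<pi> h s) (\<lambda>a. E (K s a) (\<lambda>s'. J \<pi> K \<gamma> (Suc N) (h@[(s,a)]) s'))"
    using g by (intro add_left_mono mult_left_mono E_mono_pol[OF v] E_mono_bool Suc.IH) auto
  also have "\<dots> = J \<pi> K \<gamma> (Suc (Suc N)) h s"
    by (rule J_Suc[OF v, symmetric])
  finally show ?case .
qed

lemma J_conv:
  assumes v: "valid_policy d \<pi>" and W: "superh d K \<gamma> W" and g: "0 \<le> \<gamma>"
  shows "(\<lambda>N. J \<pi> K \<gamma> N h s) \<longlonglongrightarrow> Vpi \<pi> K \<gamma> h s" "J \<pi> K \<gamma> N h s \<le> Vpi \<pi> K \<gamma> h s"
proof -
  have inc: "incseq (\<lambda>N. J \<pi> K \<gamma> N h s)"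
    by (rule incseq_SucI) (rule J_mono[OF v g])
  have bnd: "\<forall>i. J \<pi> K \<gamma> i h s \<le> W s" using J_le_W[OF v W g] by blast
  obtain L where L: "(\<lambda>N. J \<pi> K \<gamma> N h s) \<longlonglongrightarrow> L"
    using incseq_convergent[OF inc bnd] by metis
  have eq: "Vpi \<pi> K \<gamma> h s = L"
  proof -
    have "Vpi \<pi> K \<gamma> h s = lim (\<lambda>N. J \<pi> K \<gamma> N h s)" unfolding Vpi_def J_def ..
    then show ?thesis using L limI by metis
  qed
  show "(\<lambda>N. J \<pi> K \<gamma> N h s) \<longlonglongrightarrow> Vpi \<pi> K \<gamma> h s" using L eq by simp
  then show "J \<pi> K \<gamma> N h s \<le> Vpi \<pi> K \<gamma> h s" using inc incseq_le by blast
qed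

lemma Vpi_le_W:
  assumes v: "valid_policy d \<pi>" and W: "superh d K \<gamma> W" and g: "0 \<le> \<gamma>"
  shows "Vpi \<pi> K \<gamma> h s \<le> W s"
  by (rule LIMSEQ_le_const2[OF J_conv(1)[OF v W g]]) (use J_le_W[OF v W g] in auto)

lemma Vpi_nonneg:
  assumes v: "valid_policy d \<pi>" and W: "superh d K \<gamma> W" and g: "0 \<le> \<gamma>"
  shows "0 \<le> Vpi \<pi> K \<gamma> h s"
  using J_conv(2)[OF v W g, of 0] by (simp add: J_0)

lemma Vpi_step:
  assumes v: "valid_policy d \<pi>" and W: "superh d K \<gamma> W" and g: "0 \<le> \<gamma>"
  shows "Vpi \<pi> K \<gamma> h s \<le> rw s + \<gamma> * E (\<pi> h s) (\<lambda>a. E (K s a) (\<lambda>s'. Vpi \<pi> K \<gamma> (h@[(s,a)]) s'))"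
proof -
  have "(\<lambda>N. J \<pi> K \<gamma> (Suc N) h s) \<longlonglongrightarrow> Vpi \<pi> K \<gamma> h s"
    using J_conv(1)[OF v W g] by (rule LIMSEQ_Suc)
  then show ?thesis
    apply (rule LIMSEQ_le_const2)
    unfolding J_Suc[OF v] using g
    by (intro exI[of _ 0] allI impI add_left_mono mult_left_mono E_mono_pol[OF v] E_mono_bool
        J_conv(2)[OF v W g]) auto
qed

lemma J_stat:
  assumes v: "valid_policy d \<pi>" and st: "\<And>h s. \<pi> h s = return_pmf (ast s)"
    and Weq: "\<And>s. W s = rw s + \<gamma> * E (K s (ast s)) W" and B: "\<And>s. W s \<le> B" and g: "0 \<le> \<gamma>"
  shows "W s - \<gamma> ^ N * B \<le> J \<pi> K \<gamma> N h s"
proof (induction N arbitrary: h s)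
  case 0 then show ?case using B by (simp add: J_0)
next
  case (Suc N)
  have "W s - \<gamma> ^ Suc N * B = rw s + \<gamma> * (E (K s (ast s)) W - \<gamma> ^ N * B)"
    using Weq[of s] by (simp add: algebra_simps)
  also have "E (K s (ast s)) W - \<gamma> ^ N * B = E (K s (ast s)) (\<lambda>s'. W s' - \<gamma> ^ N * B)"
    by (simp add: Bochner_Integration.integral_diff[OF integ_bool integ_bool])
  also have "rw s + \<gamma> * \<dots> \<le> rw s + \<gamma> * E (K s (ast s)) (\<lambda>s'. J \<pi> K \<gamma> N (h@[(s,ast s)]) s')"
    using g by (intro add_left_mono mult_left_mono E_mono_bool Suc.IH) auto
  also have "\<dots> = J \<pi> K \<gamma> (Suc N) h s"
    unfolding J_Suc[OF v] st by simp
  finally show ?case .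
qed

lemma Vpi_stat:
  assumes v: "valid_policy d \<pi>" and st: "\<And>h s. \<pi> h s = return_pmf (ast s)"
    and W: "superh d K \<gamma> W"
    and Weq: "\<And>s. W s = rw s + \<gamma> * E (K s (ast s)) W" and B: "\<And>s. W s \<le> B" and g: "0 \<le> \<gamma>" "\<gamma> < 1"
  shows "W s \<le> Vpi \<pi> K \<gamma> h s"
proof -
  have "(\<lambda>N. W s - \<gamma> ^ N * B) \<longlonglongrightarrow> W s - 0 * B"
    by (intro tendsto_intros LIMSEQ_realpow_zero g)
  then have lim: "(\<lambda>N. W s - \<gamma> ^ N * B) \<longlonglongrightarrow> W s" by simp
  have "\<And>N. W s - \<gamma> ^ N * B \<le> J \<pi> K \<gamma> N h s"
    by (rule J_stat[where ast=ast and W=W and B=B]) (use v st Weq B g in auto)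
  then show ?thesis
    using LIMSEQ_le[OF lim J_conv(1)[OF v W g(1)]] by auto
qed

lemma Vstar_eq:
  assumes W: "superh d K \<gamma> W" and ast: "\<And>s. ast s \<in> actions d"
    and Weq: "\<And>s. W s = rw s + \<gamma> * E (K s (ast s)) W" and B: "\<And>s. W s \<le> B" and g: "0 \<le> \<gamma>" "\<gamma> < 1"
  shows "Vstar d K \<gamma> s = W s"
proof -
  define \<pi>s :: policy where "\<pi>s = (\<lambda>h s. return_pmf (ast s))"
  have vs: "valid_policy d \<pi>s" using ast by (simp add: valid_policy_def \<pi>s_def)
  have ne: "{\<pi>. valid_policy d \<pi>} \<noteq> {}" using vs by blast
  have le: "\<And>\<pi>. \<pi> \<in> {\<pi>. valid_policy d \<pi>} \<Longrightarrow> Vpi \<pi> K \<gamma> [] s \<le> W s"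
    using Vpi_le_W[OF _ W g(1)] by blast
  have bdd: "bdd_above ((\<lambda>\<pi>. Vpi \<pi> K \<gamma> [] s) ` {\<pi>. valid_policy d \<pi>})"
    using le by (intro bdd_aboveI2) 
  have "Vstar d K \<gamma> s \<le> W s" unfolding Vstar_def by (rule cSUP_least[OF ne le])
  moreover have "W s \<le> Vstar d K \<gamma> s" unfolding Vstar_def
    by (rule cSUP_upper2[OF bdd, of \<pi>s]) (use vs Vpi_stat[OF vs _ W Weq B g] in \<open>auto simp: \<pi>s_def\<close>)
  ultimately show ?thesis by simp
qed

lemma D_step:
  assumes v: "valid_policy d \<pi>" and W: "superh d K \<gamma> W" and g: "0 \<le> \<gamma>"
  shows "E (\<pi> h s) (\<lambda>a. (W s - rw s - \<gamma> * E (K s a) W) + \<gamma> * E (K s a) (\<lambda>s'. W s' - Vpi \<pi> K \<gamma> (h@[(s,a)]) s'))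
         \<le> W s - Vpi \<pi> K \<gamma> h s"
proof -
  have "\<And>a. (W s - rw s - \<gamma> * E (K s a) W) + \<gamma> * E (K s a) (\<lambda>s'. W s' - Vpi \<pi> K \<gamma> (h@[(s,a)]) s')
        = (W s - rw s) + (- \<gamma>) * E (K s a) (\<lambda>s'. Vpi \<pi> K \<gamma> (h@[(s,a)]) s')"
    by (simp add: Bochner_Integration.integral_diff[OF integ_bool integ_bool] algebra_simps)
  then have "E (\<pi> h s) (\<lambda>a. (W s - rw s - \<gamma> * E (K s a) W) + \<gamma> * E (K s a) (\<lambda>s'. W s' - Vpi \<pi> K \<gamma> (h@[(s,a)]) s'))
     = (W s - rw s) + (- \<gamma>) * E (\<pi> h s) (\<lambda>a. E (K s a) (\<lambda>s'. Vpi \<pi> K \<gamma> (h@[(s,a)]) s'))"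
    by (simp only: E_lin[OF integ_pol[OF v]])
  also have "\<dots> \<le> W s - Vpi \<pi> K \<gamma> h s"
    using Vpi_step[OF v W g, of h s] by simp
  finally show ?thesis .
qed


definition wt :: "real \<Rightarrow> nat \<Rightarrow> real" where "wt \<gamma> u = (\<Sum>j\<le>u. \<gamma> ^ j)"

lemma sum_shift_gen:
  fixes f :: "state \<Rightarrow> action \<Rightarrow> real" and \<gamma> :: real
  shows "(\<Sum>u<Suc n. \<gamma> ^ u * f (fst (((s,a)#r) ! u)) (snd (((s,a)#r) ! u)))
   = f s a + \<gamma> * (\<Sum>u<n. \<gamma> ^ u * f (fst (r ! u)) (snd (r ! u)))"
proof -
  have "(\<Sum>u<Suc n. \<gamma> ^ u * f (fst (((s,a)#r) ! u)) (snd (((s,a)#r) ! u)))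
     = f s a + (\<Sum>u<n. \<gamma> ^ Suc u * f (fst (r ! u)) (snd (r ! u)))"
    by (simp only: sum.lessThan_Suc_shift) simp
  also have "\<dots> = f s a + \<gamma> * (\<Sum>u<n. \<gamma> ^ u * f (fst (r ! u)) (snd (r ! u)))"
    by (simp add: sum_distrib_left mult.assoc)
  finally show ?thesis .
qed

lemma sum_shift_D:
  fixes D :: "history \<Rightarrow> state \<Rightarrow> real"
  shows "(\<Sum>t<Suc n. D (h @ take t ((s,a)#r)) (fst (((s,a)#r) ! t)))
   = D h s + (\<Sum>t<n. D ((h@[(s,a)]) @ take t r) (fst (r ! t)))"
  by (simp only: sum.lessThan_Suc_shift) simp

lemma sum_shift_wt:
  fixes f :: "state \<Rightarrow> action \<Rightarrow> real" and \<gamma> :: real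
  shows "(\<Sum>u<Suc n. wt \<gamma> u * f (fst (((s,a)#r) ! u)) (snd (((s,a)#r) ! u)))
   = f s a + \<gamma> * (\<Sum>u<n. \<gamma> ^ u * f (fst (r ! u)) (snd (r ! u)))
     + (\<Sum>u<n. wt \<gamma> u * f (fst (r ! u)) (snd (r ! u)))"
proof -
  have "(\<Sum>u<Suc n. wt \<gamma> u * f (fst (((s,a)#r) ! u)) (snd (((s,a)#r) ! u)))
     = f s a + (\<Sum>u<n. (\<gamma> ^ Suc u + wt \<gamma> u) * f (fst (r ! u)) (snd (r ! u)))"
    by (simp only: sum.lessThan_Suc_shift) (simp add: wt_def add.commute)
  also have "\<dots> = f s a + \<gamma> * (\<Sum>u<n. \<gamma> ^ u * f (fst (r ! u)) (snd (r ! u)))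
     + (\<Sum>u<n. wt \<gamma> u * f (fst (r ! u)) (snd (r ! u)))"
    by (simp add: sum_distrib_left mult.assoc distrib_right sum.distrib)
  finally show ?thesis .
qed

context
  fixes d :: nat and \<pi> :: policy and K :: "state \<Rightarrow> action \<Rightarrow> state pmf" and \<gamma> :: real
  assumes v: "valid_policy d \<pi>"
begin

lemmas [simp] = integ[OF v] integ_pol[OF v] integ_bool

definition Psi :: "(state \<Rightarrow> action \<Rightarrow> real) \<Rightarrow> nat \<Rightarrow> history \<Rightarrow> state \<Rightarrow> real" where
  "Psi f n h s = E (traj \<pi> K n h s) (\<lambda>\<tau>. \<Sum>u<n. \<gamma> ^ u * f (fst (\<tau> ! u)) (snd (\<tau> ! u)))"

definition Phi :: "(history \<Rightarrow> state \<Rightarrow> real) \<Rightarrow> nat \<Rightarrow> history \<Rightarrow> state \<Rightarrow> real" where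
  "Phi D n h s = E (traj \<pi> K n h s) (\<lambda>\<tau>. \<Sum>t<n. D (h @ take t \<tau>) (fst (\<tau> ! t)))"

definition Thw :: "(state \<Rightarrow> action \<Rightarrow> real) \<Rightarrow> nat \<Rightarrow> history \<Rightarrow> state \<Rightarrow> real" where
  "Thw f n h s = E (traj \<pi> K n h s) (\<lambda>\<tau>. \<Sum>u<n. wt \<gamma> u * f (fst (\<tau> ! u)) (snd (\<tau> ! u)))"

lemma Psi_Suc: "Psi f (Suc n) h s = E (\<pi> h s) (\<lambda>a. f s a + \<gamma> * E (K s a) (\<lambda>s'. Psi f n (h@[(s,a)]) s'))"
  unfolding Psi_def traj_exp_Suc[OF v] sum_shift_gen
  by (simp add: Bochner_Integration.integral_add integral_mult_right)

lemma Phi_Suc: "Phi D (Suc n) h s = D h s + E (\<pi> h s) (\<lambda>a. E (K s a) (\<lambda>s'. Phi D n (h@[(s,a)]) s'))"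
  unfolding Phi_def traj_exp_Suc[OF v] sum_shift_D
  by (simp add: Bochner_Integration.integral_add)

lemma Theta_Suc: "Thw f (Suc n) h s = E (\<pi> h s) (\<lambda>a. f s a + \<gamma> * E (K s a) (\<lambda>s'. Psi f n (h@[(s,a)]) s')
     + E (K s a) (\<lambda>s'. Thw f n (h@[(s,a)]) s'))"
  unfolding Thw_def Psi_def traj_exp_Suc[OF v] sum_shift_wt
  by (simp add: Bochner_Integration.integral_add integral_mult_right)

lemma Psi_le_D:
  assumes step: "\<And>h s. E (\<pi> h s) (\<lambda>a. f s a + \<gamma> * E (K s a) (\<lambda>s'. D (h@[(s,a)]) s')) \<le> D h s"
    and Dnn: "\<And>h s. 0 \<le> D h s" and g: "0 \<le> \<gamma>"
  shows "Psi f n h s \<le> D h s"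
proof (induction n arbitrary: h s)
  case 0 then show ?case using Dnn by (simp add: Psi_def)
next
  case (Suc n)
  have "Psi f (Suc n) h s \<le> E (\<pi> h s) (\<lambda>a. f s a + \<gamma> * E (K s a) (\<lambda>s'. D (h@[(s,a)]) s'))"
    unfolding Psi_Suc using g
    by (intro integral_mono add_left_mono mult_left_mono E_mono_bool Suc.IH) auto
  also have "\<dots> \<le> D h s" by (rule step)
  finally show ?case .
qed

lemma Thw_le_Phi:
  assumes step: "\<And>h s. E (\<pi> h s) (\<lambda>a. f s a + \<gamma> * E (K s a) (\<lambda>s'. D (h@[(s,a)]) s')) \<le> D h s"
    and Dnn: "\<And>h s. 0 \<le> D h s" and g: "0 \<le> \<gamma>"
  shows "Thw f n h s \<le> Phi D n h s"
proof (induction n arbitrary: h s)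
  case 0 then show ?case by (simp add: Psi_def Thw_def Phi_def)
next
  case (Suc n)
  have "Thw f (Suc n) h s = Psi f (Suc n) h s + E (\<pi> h s) (\<lambda>a. E (K s a) (\<lambda>s'. Thw f n (h@[(s,a)]) s'))"
    unfolding Theta_Suc Psi_Suc by (simp add: Bochner_Integration.integral_add)
  also have "\<dots> \<le> D h s + E (\<pi> h s) (\<lambda>a. E (K s a) (\<lambda>s'. Phi D n (h@[(s,a)]) s'))"
    by (intro add_mono Psi_le_D[OF step Dnn g] integral_mono E_mono_bool Suc.IH) auto
  also have "\<dots> = Phi D (Suc n) h s" by (simp add: Phi_Suc)
  finally show ?case .
qed

end


definition rho :: "(state \<Rightarrow> action \<Rightarrow> state pmf) \<Rightarrow> (state \<Rightarrow> action \<Rightarrow> state pmf) \<Rightarrow> state \<Rightarrow> action \<Rightarrow> state \<Rightarrow> real" where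
  "rho K K' s a s' = pmf (K' s a) s' / pmf (K s a) s'"

definition lr :: "(state \<Rightarrow> action \<Rightarrow> state pmf) \<Rightarrow> (state \<Rightarrow> action \<Rightarrow> state pmf) \<Rightarrow> history \<Rightarrow> real" where
  "lr K K' \<tau> = (\<Prod>u<length \<tau> - 1. rho K K' (fst (\<tau>!u)) (snd (\<tau>!u)) (fst (\<tau>!Suc u)))"

lemma lr_Nil: "lr K K' [] = 1" by (simp add: lr_def)
lemma lr_single: "lr K K' [x] = 1" by (simp add: lr_def)

lemma lr_Cons:
  assumes "r \<noteq> []"
  shows "lr K K' ((s,a)#r) = rho K K' s a (fst (r!0)) * lr K K' r"
proof -
  obtain m where m: "length r = Suc m" using assms by (cases r) auto
  show ?thesis unfolding lr_def using m
    by (simp only: length_Cons diff_Suc_1 prod.lessThan_Suc_shift) simp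
qed

lemma lr_nonneg: "0 \<le> lr K K' \<tau>"
  unfolding lr_def rho_def by (intro prod_nonneg) auto

lemma E_bool_change:
  fixes p q :: "bool pmf"
  assumes "\<And>x. pmf p x > 0"
  shows "E q G = E p (\<lambda>x. pmf q x / pmf p x * G x)"
proof -
  have "E q G = (\<Sum>x\<in>UNIV. pmf q x *\<^sub>R G x)" by (rule integral_measure_pmf) auto
  also have "\<dots> = (\<Sum>x\<in>UNIV. pmf p x *\<^sub>R (pmf q x / pmf p x * G x))"
    using assms by (intro sum.cong refl) (simp add: field_simps less_imp_neq[symmetric])
  also have "\<dots> = E p (\<lambda>x. pmf q x / pmf p x * G x)" by (rule integral_measure_pmf[symmetric]) auto
  finally show ?thesis .
qed

context
  fixes d :: nat and \<pi> :: policy and K K' :: "state \<Rightarrow> action \<Rightarrow> state pmf"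
  assumes v: "valid_policy d \<pi>" and pos: "\<And>s a s'. a \<in> actions d \<Longrightarrow> pmf (K s a) s' > 0"
begin

lemmas [simp] = integ[OF v] integ_pol[OF v] integ_bool

lemma com: "E (traj \<pi> K' n h s) f = E (traj \<pi> K n h s) (\<lambda>\<tau>. f \<tau> * lr K K' \<tau>)"
proof (induction n arbitrary: h s f)
  case 0 then show ?case by (simp add: lr_Nil)
next
  case (Suc n)
  have "E (traj \<pi> K' (Suc n) h s) f =
    E (\<pi> h s) (\<lambda>a. E (K' s a) (\<lambda>s'. E (traj \<pi> K n (h@[(s,a)]) s') (\<lambda>r. f ((s,a)#r) * lr K K' r)))"
    unfolding traj_exp_Suc[OF v] Suc.IH ..
  also have "\<dots> = E (\<pi> h s) (\<lambda>a. E (K s a) (\<lambda>s'. E (traj \<pi> K n (h@[(s,a)]) s') (\<lambda>r. f ((s,a)#r) * lr K K' ((s,a)#r))))"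
  proof (rule integral_cong_AE)
    show "AE a in measure_pmf (\<pi> h s). E (K' s a) (\<lambda>s'. E (traj \<pi> K n (h@[(s,a)]) s') (\<lambda>r. f ((s,a)#r) * lr K K' r))
       = E (K s a) (\<lambda>s'. E (traj \<pi> K n (h@[(s,a)]) s') (\<lambda>r. f ((s,a)#r) * lr K K' ((s,a)#r)))"
    proof (unfold AE_measure_pmf_iff, intro ballI)
      fix a assume a: "a \<in> set_pmf (\<pi> h s)"
      then have aa: "a \<in> actions d" using v by (auto simp: valid_policy_def)
      show "E (K' s a) (\<lambda>s'. E (traj \<pi> K n (h@[(s,a)]) s') (\<lambda>r. f ((s,a)#r) * lr K K' r))
       = E (K s a) (\<lambda>s'. E (traj \<pi> K n (h@[(s,a)]) s') (\<lambda>r. f ((s,a)#r) * lr K K' ((s,a)#r)))"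
      proof (cases n)
        case 0 then show ?thesis by (simp add: lr_Nil lr_single)
      next
        case (Suc m)
        have "E (K' s a) (\<lambda>s'. E (traj \<pi> K n (h@[(s,a)]) s') (\<lambda>r. f ((s,a)#r) * lr K K' r))
          = E (K s a) (\<lambda>s'. rho K K' s a s' * E (traj \<pi> K n (h@[(s,a)]) s') (\<lambda>r. f ((s,a)#r) * lr K K' r))"
          unfolding rho_def by (rule E_bool_change) (use pos aa in auto)
        also have "\<dots> = E (K s a) (\<lambda>s'. E (traj \<pi> K n (h@[(s,a)]) s') (\<lambda>r. f ((s,a)#r) * lr K K' ((s,a)#r)))"
        proof (rule Bochner_Integration.integral_cong[OF refl])
          fix s'
          have "E (traj \<pi> K n (h@[(s,a)]) s') (\<lambda>r. f ((s,a)#r) * lr K K' ((s,a)#r))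
             = E (traj \<pi> K n (h@[(s,a)]) s') (\<lambda>r. rho K K' s a s' * (f ((s,a)#r) * lr K K' r))"
          proof (rule integral_cong_AE)
            show "AE r in measure_pmf (traj \<pi> K n (h@[(s,a)]) s'). f ((s,a)#r) * lr K K' ((s,a)#r) = rho K K' s a s' * (f ((s,a)#r) * lr K K' r)"
            proof (unfold AE_measure_pmf_iff, intro ballI)
              fix r assume r: "r \<in> set_pmf (traj \<pi> K n (h@[(s,a)]) s')"
              from traj_support[OF v r] Suc have "r \<noteq> []" "fst (r!0) = s'" by auto
              then show "f ((s,a)#r) * lr K K' ((s,a)#r) = rho K K' s a s' * (f ((s,a)#r) * lr K K' r)"
                by (simp add: lr_Cons)
            qed
          qed auto
          then show "rho K K' s a s' * E (traj \<pi> K n (h@[(s,a)]) s') (\<lambda>r. f ((s,a)#r) * lr K K' r)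
            = E (traj \<pi> K n (h@[(s,a)]) s') (\<lambda>r. f ((s,a)#r) * lr K K' ((s,a)#r))"
            by (simp add: integral_mult_right)
        qed
        finally show ?thesis .
      qed
    qed
  qed auto
  also have "\<dots> = E (traj \<pi> K (Suc n) h s) (\<lambda>\<tau>. f \<tau> * lr K K' \<tau>)"
    unfolding traj_exp_Suc[OF v] ..
  finally show ?case .
qed

lemma rho_nonneg: "0 \<le> rho K K' s a s'" by (simp add: rho_def)

lemma lr_moment:
  assumes c: "1 \<le> c" and chi: "\<And>s a. a \<in> actions d \<Longrightarrow> E (K' s a) (\<lambda>s'. rho K K' s a s') \<le> c"
  shows "E (traj \<pi> K' n h s) (lr K K') \<le> c ^ n"
proof (induction n arbitrary: h s)
  case 0 then show ?case by (simp add: lr_Nil)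
next
  case (Suc n)
  have "E (traj \<pi> K' (Suc n) h s) (lr K K') =
    E (\<pi> h s) (\<lambda>a. E (K' s a) (\<lambda>s'. E (traj \<pi> K' n (h@[(s,a)]) s') (\<lambda>r. lr K K' ((s,a)#r))))"
    by (rule traj_exp_Suc[OF v])
  also have "\<dots> \<le> c ^ Suc n"
  proof (rule E_pol_const_le[OF v])
    fix a assume aa: "a \<in> actions d"
    show "E (K' s a) (\<lambda>s'. E (traj \<pi> K' n (h@[(s,a)]) s') (\<lambda>r. lr K K' ((s,a)#r))) \<le> c ^ Suc n"
    proof (cases n)
      case 0 then show ?thesis using c by (simp add: lr_single)
    next
      case (Suc m)
      have "E (K' s a) (\<lambda>s'. E (traj \<pi> K' n (h@[(s,a)]) s') (\<lambda>r. lr K K' ((s,a)#r)))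
          \<le> E (K' s a) (\<lambda>s'. rho K K' s a s' * c ^ n)"
      proof (rule E_mono_bool)
        fix s'
        have "E (traj \<pi> K' n (h@[(s,a)]) s') (\<lambda>r. lr K K' ((s,a)#r))
            = E (traj \<pi> K' n (h@[(s,a)]) s') (\<lambda>r. rho K K' s a s' * lr K K' r)"
        proof (rule integral_cong_AE)
          show "AE r in measure_pmf (traj \<pi> K' n (h@[(s,a)]) s'). lr K K' ((s,a)#r) = rho K K' s a s' * lr K K' r"
          proof (unfold AE_measure_pmf_iff, intro ballI)
            fix r assume r: "r \<in> set_pmf (traj \<pi> K' n (h@[(s,a)]) s')"
            from traj_support[OF v r] Suc have "r \<noteq> []" "fst (r!0) = s'" by auto
            then show "lr K K' ((s,a)#r) = rho K K' s a s' * lr K K' r" by (simp add: lr_Cons)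
          qed
        qed auto
        also have "\<dots> = rho K K' s a s' * E (traj \<pi> K' n (h@[(s,a)]) s') (lr K K')"
          by (simp add: integral_mult_right)
        also have "\<dots> \<le> rho K K' s a s' * c ^ n"
          by (intro mult_left_mono Suc.IH rho_nonneg)
        finally show "E (traj \<pi> K' n (h@[(s,a)]) s') (\<lambda>r. lr K K' ((s,a)#r)) \<le> rho K K' s a s' * c ^ n" .
      qed
      also have "\<dots> = E (K' s a) (\<lambda>s'. rho K K' s a s') * c ^ n"
        by (simp add: integral_mult_left)
      also have "\<dots> \<le> c * c ^ n"
        using c by (intro mult_right_mono chi aa) auto
      finally show ?thesis by simp
    qed
  qed
  finally show ?case .
qed

lemma amgm: "0 < l \<Longrightarrow> (x::real) * y \<le> (l * x\<^sup>2 + y\<^sup>2 / l) / 2"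
proof -
  assume l: "0 < l"
  have "0 \<le> (l * x - y)\<^sup>2 / l" using l by simp
  also have "(l * x - y)\<^sup>2 / l = l * x\<^sup>2 + y\<^sup>2 / l - 2 * x * y"
    using l by (simp add: power2_eq_square field_simps)
  finally show ?thesis by simp
qed

lemma tv_bound:
  assumes M: "\<And>\<tau>. \<tau> \<in> set_pmf (traj \<pi> K n h s) \<Longrightarrow> \<bar>H \<tau>\<bar> \<le> M" and l: "0 < l"
  shows "E (traj \<pi> K n h s) H - E (traj \<pi> K' n h s) H
     \<le> (l * M\<^sup>2 + (E (traj \<pi> K' n h s) (lr K K') - 1) / l) / 2"
proof -
  let ?P = "traj \<pi> K n h s" and ?Q = "traj \<pi> K' n h s" and ?L = "lr K K'"
  have Q1: "E ?Q H = E ?P (\<lambda>\<tau>. H \<tau> * ?L \<tau>)" by (rule com)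
  have Q2: "E ?Q (\<lambda>_. 1) = E ?P (\<lambda>\<tau>. 1 * ?L \<tau>)" by (rule com)
  have Q3: "E ?Q ?L = E ?P (\<lambda>\<tau>. ?L \<tau> * ?L \<tau>)" by (rule com)
  have "E ?P H - E ?Q H = E ?P (\<lambda>\<tau>. H \<tau> * (1 - ?L \<tau>))"
  proof -
    have "E ?P H - E ?P (\<lambda>\<tau>. H \<tau> * ?L \<tau>) = E ?P (\<lambda>\<tau>. H \<tau> - H \<tau> * ?L \<tau>)"
      by (rule Bochner_Integration.integral_diff[symmetric]) auto
    also have "\<dots> = E ?P (\<lambda>\<tau>. H \<tau> * (1 - ?L \<tau>))" by (simp add: right_diff_distrib)
    finally show ?thesis unfolding Q1 .
  qed
  also have "\<dots> \<le> E ?P (\<lambda>\<tau>. (l * (H \<tau>)\<^sup>2 + (1 - ?L \<tau>)\<^sup>2 / l) / 2)"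
    by (intro integral_mono amgm l) auto
  also have "\<dots> = (l * E ?P (\<lambda>\<tau>. (H \<tau>)\<^sup>2) + E ?P (\<lambda>\<tau>. 1 - 2 * ?L \<tau> + ?L \<tau> * ?L \<tau>) / l) / 2"
  proof -
    have e: "\<And>\<tau>. (l * (H \<tau>)\<^sup>2 + (1 - ?L \<tau>)\<^sup>2 / l) / 2 = (1/2) * (l * (H \<tau>)\<^sup>2) + (1/2) * ((1 - 2 * ?L \<tau> + ?L \<tau> * ?L \<tau>) / l)"
      using l by (simp add: power2_eq_square field_simps)
    show ?thesis unfolding e
      using l by (simp only: Bochner_Integration.integral_add integ[OF v] integral_mult_right integral_divide) (simp add: field_simps)
  qed
  also have "E ?P (\<lambda>\<tau>. 1 - 2 * ?L \<tau> + ?L \<tau> * ?L \<tau>) = E ?Q ?L - 1"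
  proof -
    have "E ?P (\<lambda>\<tau>. 1 - 2 * ?L \<tau> + ?L \<tau> * ?L \<tau>) = 1 - 2 * E ?P ?L + E ?P (\<lambda>\<tau>. ?L \<tau> * ?L \<tau>)"
      by (simp only: Bochner_Integration.integral_add Bochner_Integration.integral_diff integ[OF v] integral_mult_right) simp
    moreover have "E ?P ?L = 1" using Q2 by simp
    ultimately show ?thesis using Q3 by simp
  qed
  also have "E ?P (\<lambda>\<tau>. (H \<tau>)\<^sup>2) \<le> M\<^sup>2"
  proof -
    have "E ?P (\<lambda>\<tau>. (H \<tau>)\<^sup>2) \<le> E ?P (\<lambda>\<tau>. M\<^sup>2)"
    proof (rule integral_mono_AE)
      show "AE x in measure_pmf ?P. (H x)\<^sup>2 \<le> M\<^sup>2"
        unfolding AE_measure_pmf_iff using M by (auto intro!: power2_le_iff_abs_le[THEN iffD2] order_trans[OF abs_ge_zero])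
    qed auto
    then show ?thesis by simp
  qed
  finally show ?thesis using l by (simp add: divide_right_mono)
qed

end


lemma E_bool: "E (q::bool pmf) f = pmf q True * f True + pmf q False * f False"
  by (subst integral_measure_pmf[of UNIV]) (auto simp: UNIV_bool)

lemma pmf_bool_False: "pmf (q::bool pmf) False = 1 - pmf q True"
proof -
  have "(\<Sum>x\<in>UNIV. pmf q x) = 1" by (rule sum_pmf_eq_1) auto
  then show ?thesis by (simp add: UNIV_bool)
qed

lemma occupancy:
  assumes v: "valid_policy d \<pi>"
    and p0: "\<And>a. a \<in> actions d \<Longrightarrow> pmf (K False a) True \<le> pmax"
    and p1: "\<And>a. a \<in> actions d \<Longrightarrow> dl \<le> pmf (K True a) False"
    and c: "0 \<le> c" "pmax * B \<le> 1 - c" "c \<le> dl * B" "0 \<le> B"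
  shows "c * n - (if s then B else 0) \<le> Psi \<pi> K 1 (\<lambda>s a. if s then 0 else 1) n h s"
proof (induction n arbitrary: h s)
  case 0 then show ?case using c by (simp add: Psi_def[OF v])
next
  case (Suc n)
  let ?f = "\<lambda>(s::state) (a::action). if s then 0 else (1::real)"
  have "c * Suc n - (if s then B else 0) \<le> E (\<pi> h s) (\<lambda>a. ?f s a + 1 * E (K s a) (\<lambda>s'. c * n - (if s' then B else 0)))"
  proof (rule E_pol_const_ge[OF v])
    fix a assume a: "a \<in> actions d"
    have e: "E (K s a) (\<lambda>s'. c * n - (if s' then B else 0)) = c * n - B * pmf (K s a) True"
      by (simp add: E_bool pmf_bool_False algebra_simps)
    show "c * Suc n - (if s then B else 0) \<le> ?f s a + 1 * E (K s a) (\<lambda>s'. c * n - (if s' then B else 0))"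
    proof (cases s)
      case True
      have "B * pmf (K True a) True \<le> B * (1 - dl)"
        using p1[OF a] c by (intro mult_left_mono) (auto simp: pmf_bool_False)
      then show ?thesis using True e c by (simp add: algebra_simps)
    next
      case False
      have "B * pmf (K False a) True \<le> B * pmax"
        using p0[OF a] c by (intro mult_left_mono) auto
      then show ?thesis using False e c by (simp add: algebra_simps)
    qed
  qed
  also have "\<dots> \<le> Psi \<pi> K 1 ?f (Suc n) h s"
    unfolding Psi_Suc[OF v]
    by (intro E_mono_pol[OF v] add_left_mono mult_left_mono E_mono_bool Suc.IH) auto
  finally show ?case .
qed


locale model =
  fixes d T :: nat and \<gamma> :: real
  assumes d2: "d \<ge> 2" and g1: "\<gamma> \<ge> 100/101" and g2: "\<gamma> < 1"
    and TT: "real T \<ge> 45 * (real d - 1)\<^sup>2 / (1 - \<gamma>)"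
begin

definition "dl = 1 - \<gamma>"
definition "Dl = Delta d \<gamma> T"
definition "Db = Deltabar d \<gamma> T"
definition "SS = sqrt ((2/5) * (real T / (1 - \<gamma>)) * ln 2)"

lemma dl_pos: "0 < dl" using g2 by (simp add: dl_def)
lemma dl_le: "dl \<le> 1/101" using g1 by (simp add: dl_def)
lemma g_eq: "\<gamma> = 1 - dl" by (simp add: dl_def)
lemma dm1: "real d - 1 \<ge> 1" using d2 by simp

lemma T_ge: "real T \<ge> 45 * (real d - 1)\<^sup>2 / dl" using TT by (simp add: dl_def)
lemma T_pos: "real T > 0"
proof -
  have "45 * (real d - 1)\<^sup>2 / dl > 0" using dm1 dl_pos by simp
  then show ?thesis using T_ge by linarith
qed

lemma SS_ge: "SS \<ge> (10/3) * (real d - 1) / dl"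
proof -
  have l2: "ln 2 \<ge> (2/3::real)" by (rule ln2_ge_two_thirds)
  define X where "X = (real d - 1)\<^sup>2 / dl\<^sup>2"
  have X: "X \<ge> 0" by (simp add: X_def)
  have "((10/3) * (real d - 1) / dl)\<^sup>2 = (100/9) * X"
    by (simp add: power2_eq_square X_def algebra_simps)
  also have "\<dots> \<le> 12 * X" using X by simp
  also have "12 * X = (2/5) * (45 * (real d - 1)\<^sup>2 / dl / dl) * (2/3)"
    by (simp add: power2_eq_square X_def)
  also have "\<dots> \<le> (2/5) * (real T / dl) * ln 2"
    using T_ge dl_pos l2 by (intro mult_mono divide_right_mono) auto
  finally show ?thesis unfolding SS_def dl_def[symmetric] by (rule real_le_rsqrt)
qed

lemma SS_pos: "SS > 0"
proof -
  have "(10/3) * (real d - 1) / dl > 0" using dm1 dl_pos by simp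
  then show ?thesis using SS_ge by linarith
qed

lemma Dl_eq: "Dl = (real d - 1) / (45 * SS)"
  by (simp add: Dl_def Delta_def SS_def)

lemma Dl_pos: "0 < Dl" using Dl_eq SS_pos dm1 by simp

lemma Dl_small: "150 * Dl \<le> dl"
proof -
  have "Dl \<le> (real d - 1) / (45 * ((10/3) * (real d - 1) / dl))"
    unfolding Dl_eq using SS_ge SS_pos dm1 dl_pos
    by (intro divide_left_mono mult_left_mono) auto
  also have "\<dots> = dl / 150" using dm1 dl_pos by (simp add: field_simps)
  finally show ?thesis by simp
qed


definition "R = \<gamma> * (dl + Dl) / (dl * (\<gamma> - Dl))"

lemma Dl_le_dl: "Dl \<le> dl / 150" using Dl_small by simp
lemma gDl: "\<gamma> - Dl \<ge> 49/50"
proof -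
  have "Dl \<le> 1/15150" using Dl_small dl_le by simp
  then show ?thesis using g1 by simp
qed

lemma Db_eq: "Db = ln R"
  unfolding Db_def Deltabar_def R_def Let_def dl_def Dl_def by simp

lemma R_pos: "R > 0" unfolding R_def using gDl dl_pos Dl_pos g1 by simp

lemma R_m1: "R - 1 = Dl / (dl * (\<gamma> - Dl))"
proof -
  have nz: "dl * (\<gamma> - Dl) \<noteq> 0" using gDl dl_pos by simp
  have "R - 1 = (\<gamma> * (dl + Dl) - dl * (\<gamma> - Dl)) / (dl * (\<gamma> - Dl))"
    unfolding R_def using nz by (simp add: diff_divide_distrib)
  also have "\<gamma> * (dl + Dl) - dl * (\<gamma> - Dl) = Dl" by (simp add: dl_def algebra_simps)
  finally show ?thesis .
qed

lemma inv_R: "1 - 1 / R = Dl / (\<gamma> * (dl + Dl))"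
proof -
  have nz: "\<gamma> * (dl + Dl) \<noteq> 0" using Dl_pos dl_pos g1 by simp
  have nz2: "dl * (\<gamma> - Dl) \<noteq> 0" using gDl dl_pos by simp
  have "1 - 1 / R = (\<gamma> * (dl + Dl) - dl * (\<gamma> - Dl)) / (\<gamma> * (dl + Dl))"
    unfolding R_def using nz nz2 by (simp add: diff_divide_distrib)
  also have "\<gamma> * (dl + Dl) - dl * (\<gamma> - Dl) = Dl" by (simp add: dl_def algebra_simps)
  finally show ?thesis .
qed

lemma Db_ub: "Db \<le> Dl / (dl * (\<gamma> - Dl))"
  unfolding Db_eq using ln_le_minus_one[OF R_pos] R_m1 by simp

lemma Db_lb: "Db \<ge> Dl / (dl + Dl)"
proof -
  have "ln (1/R) \<le> 1/R - 1" using R_pos by (intro ln_le_minus_one) simp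
  then have "1 - 1/R \<le> ln R" using R_pos by (simp add: ln_div)
  then have "Dl / (\<gamma> * (dl + Dl)) \<le> Db" unfolding Db_eq inv_R .
  moreover have "Dl / (dl + Dl) \<le> Dl / (\<gamma> * (dl + Dl))"
    using Dl_pos dl_pos g1 g2 by (intro divide_left_mono) (auto simp: mult_le_cancel_right1)
  ultimately show ?thesis by linarith
qed

lemma Db_pos: "Db > 0"
proof -
  have "Dl / (dl + Dl) > 0" using Dl_pos dl_pos by simp
  then show ?thesis using Db_lb by linarith
qed

lemma exp_Db: "exp Db = R" unfolding Db_eq using R_pos by simp

lemma Db_small: "Db \<le> 1/99"
proof -
  have "Dl / (dl * (\<gamma> - Dl)) \<le> (dl/150) / (dl * (49/50))"
    using Dl_pos dl_pos gDl Dl_le_dl by (intro frac_le mult_left_mono) auto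
  also have "\<dots> \<le> 1/99" using dl_pos by simp
  finally show ?thesis using Db_ub by linarith
qed

lemma R_le: "R \<le> 103/100"
proof -
  have "\<gamma> * (dl + Dl) \<le> 103/100 * (dl * (\<gamma> - Dl))"
  proof -
    have f1: "\<gamma> * Dl \<le> \<gamma> * dl / 150" using Dl_le_dl g1 mult_left_mono[of Dl "dl/150" \<gamma>] by auto
    have f2: "dl * Dl \<le> dl * dl / 150" using Dl_le_dl dl_pos mult_left_mono[of Dl "dl/150" dl] by auto
    have f3: "dl * dl \<le> dl / 101" using dl_le dl_pos mult_left_mono[of dl "1/101" dl] by auto
    have f4: "dl * 100 / 101 \<le> \<gamma> * dl" using g1 dl_pos mult_right_mono[of "100/101" \<gamma> dl] by auto
    have "\<gamma> * dl + \<gamma> * Dl \<le> (103/100) * (\<gamma> * dl) - (103/100) * (dl * Dl)"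
      using f1 f2 f3 f4 g1 dl_pos mult_pos_pos[of \<gamma> dl] by linarith
    then show ?thesis by (simp add: algebra_simps)
  qed
  then show ?thesis unfolding R_def using gDl dl_pos by (simp add: divide_le_eq)
qed

definition "eta = Db / (real d - 1)"

lemma eta_pos: "eta > 0" using Db_pos dm1 by (simp add: eta_def)

lemma eta_le: "eta \<le> (50/49) * (Dl / (real d - 1)) / dl"
proof -
  have "eta \<le> Dl / (dl * (\<gamma> - Dl)) / (real d - 1)"
    unfolding eta_def using Db_ub dm1 by (intro divide_right_mono) auto
  also have "\<dots> \<le> Dl / (dl * (49/50)) / (real d - 1)"
    using Dl_pos dl_pos gDl dm1 by (intro divide_right_mono divide_left_mono mult_left_mono) auto
  also have "\<dots> = (50/49) * (Dl / (real d - 1)) / dl" by (simp add: field_simps)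
  finally show ?thesis .
qed

lemma Dl_d_sq: "(Dl / (real d - 1))\<^sup>2 \<le> dl / (540 * real T)"
proof -
  have l2: "ln 2 \<ge> (2/3::real)" by (rule ln2_ge_two_thirds)
  have e: "Dl / (real d - 1) = 1 / (45 * SS)" unfolding Dl_eq using dm1 by simp
  have "SS\<^sup>2 = (2/5) * (real T / dl) * ln 2" unfolding SS_def dl_def using T_pos g2 by simp
  also have "\<dots> \<ge> (2/5) * (real T / dl) * (2/3)"
    using T_pos dl_pos l2 by (intro mult_left_mono) auto
  finally have "SS\<^sup>2 \<ge> (4/15) * real T / dl" by simp
  then have "2025 * SS\<^sup>2 \<ge> 540 * real T / dl" by simp
  then have "1 / (2025 * SS\<^sup>2) \<le> 1 / (540 * real T / dl)"
    using T_pos dl_pos SS_pos by (intro divide_left_mono) auto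
  then show ?thesis unfolding e by (simp add: power2_eq_square)
qed

lemma eta_sq: "eta\<^sup>2 \<le> 1 / (500 * real T * dl)"
proof -
  have "eta\<^sup>2 \<le> ((50/49) * (Dl / (real d - 1)) / dl)\<^sup>2"
    using eta_le eta_pos by (intro power_mono) auto
  also have "\<dots> = (50/49)\<^sup>2 * (Dl / (real d - 1))\<^sup>2 / dl\<^sup>2" by (simp only: power_divide power_mult_distrib)
  also have "\<dots> \<le> (50/49)\<^sup>2 * (dl / (540 * real T)) / dl\<^sup>2"
    using Dl_d_sq dl_pos by (intro divide_right_mono mult_left_mono) auto
  also have "\<dots> = ((50/49)\<^sup>2 / 540) / (real T * dl)" using dl_pos by (simp add: power2_eq_square field_simps)
  also have "\<dots> \<le> (1/500) / (real T * dl)" using dl_pos T_pos by (intro divide_right_mono) (auto simp: power2_eq_square)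
  finally show ?thesis by simp
qed

definition pf :: "real \<Rightarrow> real" where "pf x = 1 / (1 + (\<gamma> / dl) * exp (- x))"

lemma C_pos: "\<gamma> / dl > 0" using dl_pos g1 by simp

lemma Cexp_pos: "(\<gamma> / dl) * exp (- x) > 0" using C_pos by (intro mult_pos_pos) auto
lemma pf_pos: "pf x > 0" unfolding pf_def using Cexp_pos[of x] by (simp only: zero_less_divide_1_iff)
lemma pf_lt1: "pf x < 1" unfolding pf_def using Cexp_pos[of x] by simp

lemma aux_cancel: "(a::real) \<noteq> 0 \<Longrightarrow> b \<noteq> 0 \<Longrightarrow> (a/b)*(b*x/(a*y)) = x/y"
  by (simp add: field_simps)

lemma pf_Db: "pf Db = dl + Dl"
proof -
  have "exp (- Db) = 1 / R" using exp_Db by (simp add: exp_minus inverse_eq_divide)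
  then have "pf Db = 1 / (1 + (\<gamma> / dl) * (dl * (\<gamma> - Dl) / (\<gamma> * (dl + Dl))))"
    unfolding pf_def R_def by simp
  also have "(\<gamma> / dl) * (dl * (\<gamma> - Dl) / (\<gamma> * (dl + Dl))) = (\<gamma> - Dl) / (dl + Dl)"
    using dl_pos Dl_pos g1 aux_cancel[of \<gamma> dl "\<gamma> - Dl" "dl + Dl"] by simp
  also have "1 + (\<gamma> - Dl) / (dl + Dl) = (dl + \<gamma>) / (dl + Dl)"
    using dl_pos Dl_pos by (simp add: field_simps)
  also have "dl + \<gamma> = 1" by (simp add: dl_def)
  finally show ?thesis by simp
qed

lemma pf_gap:
  assumes "x \<le> y" shows "(1 - pf y) * pf x * (y - x) \<le> pf y - pf x"
proof -
  define C where "C = \<gamma> / dl"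
  have C: "C > 0" using C_pos by (simp add: C_def)
  define u where "u = exp (- x)" define w where "w = exp (- y)"
  have u: "u > 0" "w > 0" by (auto simp: u_def w_def)
  have nz: "1 + C * w \<noteq> 0" "1 + C * u \<noteq> 0" proof -
    have "1 + C * w > 0" "1 + C * u > 0" using C u by (simp_all add: add_pos_pos)
    then show "1 + C * w \<noteq> 0" "1 + C * u \<noteq> 0" by simp_all
  qed
  have uw: "u = w * exp (y - x)" by (simp add: u_def w_def flip: exp_add)
  have "1 + (y - x) \<le> exp (y - x)" by (rule exp_ge_add_one_self)
  then have "w * (1 + (y - x)) \<le> w * exp (y - x)" using u by (intro mult_left_mono) auto
  then have key: "w * (y - x) \<le> u - w" unfolding uw by (simp add: algebra_simps)
  have "pf y - pf x = C * (u - w) / ((1 + C * w) * (1 + C * u))"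
    unfolding pf_def C_def[symmetric] u_def[symmetric] w_def[symmetric] using C u nz
    by (simp add: field_simps)
  moreover have "(1 - pf y) * pf x * (y - x) = C * (w * (y - x)) / ((1 + C * w) * (1 + C * u))"
    unfolding pf_def C_def[symmetric] u_def[symmetric] w_def[symmetric] using C u nz
    by (simp add: field_simps)
  ultimately show ?thesis using key C u
    by (simp add: divide_right_mono mult_left_mono add_pos_pos)
qed

lemma pf_diff:
  assumes "x \<le> y" shows "pf y - pf x \<le> (y - x) * pf y"
proof -
  define C where "C = \<gamma> / dl"
  have C: "C > 0" using C_pos by (simp add: C_def)
  define u where "u = exp (- x)" define w where "w = exp (- y)"
  have u: "u > 0" "w > 0" by (auto simp: u_def w_def)
  have nz: "1 + C * w \<noteq> 0" "1 + C * u \<noteq> 0" proof -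
    have "1 + C * w > 0" "1 + C * u > 0" using C u by (simp_all add: add_pos_pos)
    then show "1 + C * w \<noteq> 0" "1 + C * u \<noteq> 0" by simp_all
  qed
  have wu: "w = u * exp (- (y - x))" by (simp add: u_def w_def flip: exp_add)
  have "1 + - (y - x) \<le> exp (- (y - x))" by (rule exp_ge_add_one_self)
  then have "u * (1 + - (y - x)) \<le> u * exp (- (y - x))" using u by (intro mult_left_mono) auto
  then have "u * (1 - (y - x)) \<le> w" unfolding wu by (simp add: algebra_simps)
  then have key: "u - w \<le> (y - x) * u" by (simp add: algebra_simps)
  have "pf y - pf x = C * (u - w) / ((1 + C * w) * (1 + C * u))"
    unfolding pf_def C_def[symmetric] u_def[symmetric] w_def[symmetric] using C u nz
    by (simp add: field_simps)
  also have "\<dots> \<le> (y - x) * (1 + C * u) / ((1 + C * w) * (1 + C * u))"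
  proof (rule divide_right_mono)
    have "C * (u - w) \<le> C * ((y - x) * u)" using key C by (intro mult_left_mono) auto
    also have "\<dots> \<le> (y - x) * (1 + C * u)" using assms by (simp add: algebra_simps)
    finally show "C * (u - w) \<le> (y - x) * (1 + C * u)" .
  qed (use C u in \<open>simp add: add_pos_pos\<close>)
  also have "\<dots> = (y - x) * pf y"
    unfolding pf_def C_def[symmetric] u_def[symmetric] w_def[symmetric] using nz
    by (simp add: mult_divide_mult_cancel_right)
  finally show ?thesis .
qed

lemma pf_mono: "x \<le> y \<Longrightarrow> pf x \<le> pf y"
  using pf_gap[of x y] pf_pos[of x] pf_lt1[of y]
  by (smt (verit) mult_nonneg_nonneg)

lemma pf_min: "pf (- Db) \<ge> (9/10) * dl"
proof -
  have "exp Db \<le> 103/100" using exp_Db R_le by simp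
  then have "exp (- (- Db)) \<le> 103/100" by simp
  then have "1 + (\<gamma> / dl) * exp (- (- Db)) \<le> 1 + (\<gamma> / dl) * (103/100)"
    using C_pos by (intro add_left_mono mult_left_mono) auto
  also have "\<dots> \<le> 1 / ((9/10) * dl)"
  proof -
    have "1 + (\<gamma> / dl) * (103/100) \<le> 1 + (1 / dl) * (103/100)"
      using g2 dl_pos by (intro add_left_mono mult_right_mono divide_right_mono) auto
    also have "\<dots> \<le> 1 / ((9/10) * dl)" using dl_pos dl_le by (simp add: field_simps)
    finally show ?thesis .
  qed
  finally have "1 / (1 / ((9/10) * dl)) \<le> pf (- Db)"
    unfolding pf_def using Cexp_pos[of "- Db"] dl_pos by (intro divide_left_mono) (auto simp del: minus_minus)
  then show ?thesis by simp
qed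

definition "LL = ln (1 / (1 - \<gamma>) - 1)"

lemma exp_LL: "exp LL = \<gamma> / dl"
proof -
  have "1 / (1 - \<gamma>) - 1 = \<gamma> / dl" using dl_pos by (simp add: dl_def field_simps)
  moreover have "\<gamma> / dl > 0" by (rule C_pos)
  ultimately show ?thesis unfolding LL_def by simp
qed

lemma alpha_pos: "alpha d \<gamma> T > 0"
  unfolding alpha_def Db_def[symmetric] using Db_pos dm1 by (simp add: add_pos_pos)
lemma beta_pos: "beta d \<gamma> T > 0"
  unfolding beta_def Db_def[symmetric] using Db_pos by (simp add: add_pos_pos)

definition ip :: "(nat \<Rightarrow> real) \<Rightarrow> action \<Rightarrow> real" where
  "ip \<theta> a = (\<Sum>i<d-1. a i * \<theta> i)"

lemma d_Suc: "d = Suc (d - 1)" using d2 by simp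

lemma sum_d: "(\<Sum>i<d. f i) = (\<Sum>i<d-1. f i) + f (d - 1)"
  by (subst d_Suc) (simp only: sum.lessThan_Suc diff_Suc_1)

lemma vin_FF: "vinner d (phi d \<gamma> T False a False) (thetabar d \<gamma> T \<theta>) = - ip \<theta> a + LL"
proof -
  have "vinner d (phi d \<gamma> T False a False) (thetabar d \<gamma> T \<theta>) =
     (\<Sum>i<d-1. - (a i * \<theta> i)) + beta d \<gamma> T * LL * (1 / beta d \<gamma> T)"
    unfolding vinner_def sum_d
    apply (rule arg_cong2[where f="(+)"])
     apply (rule sum.cong[OF refl])
    using alpha_pos apply (simp add: phi_def thetabar_def)
    apply (simp add: phi_def thetabar_def LL_def)
    done
  also have "\<dots> = - ip \<theta> a + LL" using beta_pos by (simp add: ip_def sum_negf)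
  finally show ?thesis .
qed

lemma vin_FT: "vinner d (phi d \<gamma> T False a True) (thetabar d \<gamma> T \<theta>) = 0"
  by (simp add: vinner_def phi_def)
lemma vin_TF: "vinner d (phi d \<gamma> T True a False) (thetabar d \<gamma> T \<theta>) = 0"
  by (simp add: vinner_def phi_def)
lemma vin_TT: "vinner d (phi d \<gamma> T True a True) (thetabar d \<gamma> T \<theta>) = LL"
proof -
  have "vinner d (phi d \<gamma> T True a True) (thetabar d \<gamma> T \<theta>) = 0 + beta d \<gamma> T * LL * (1 / beta d \<gamma> T)"
    unfolding vinner_def sum_d
    apply (rule arg_cong2[where f="(+)"])
     apply (simp add: phi_def)
    apply (simp add: phi_def thetabar_def LL_def)
    done
  then show ?thesis using beta_pos by simp
qed

lemma pmf_x0: "pmf (trans_M d \<gamma> T \<theta> False a) True = pf (ip \<theta> a)"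
proof -
  have e: "exp (- ip \<theta> a + LL) = (\<gamma> / dl) * exp (- ip \<theta> a)"
    unfolding exp_add exp_LL by simp
  have p: "exp 0 / (exp (- ip \<theta> a + LL) + exp 0) = pf (ip \<theta> a)"
    unfolding e pf_def by (simp add: add.commute)
  show ?thesis unfolding trans_M_def vin_FF vin_FT p
    using pf_pos[of "ip \<theta> a"] pf_lt1[of "ip \<theta> a"] by simp
qed

lemma pmf_x1: "pmf (trans_M d \<gamma> T \<theta> True a) True = \<gamma>"
proof -
  have p: "exp LL / (exp 0 + exp LL) = \<gamma>"
    unfolding exp_LL using dl_pos by (simp add: field_simps dl_def)
  show ?thesis unfolding trans_M_def vin_TT vin_TF p using g1 g2 by simp
qed

lemma pmf_x1F: "pmf (trans_M d \<gamma> T \<theta> True a) False = dl"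
  using pmf_x1 pmf_bool_False[of "trans_M d \<gamma> T \<theta> True a"] by (simp add: dl_def)
lemma pmf_x0F: "pmf (trans_M d \<gamma> T \<theta> False a) False = 1 - pf (ip \<theta> a)"
  using pmf_x0 pmf_bool_False[of "trans_M d \<gamma> T \<theta> False a"] by simp

definition sg :: "(nat \<Rightarrow> real) \<Rightarrow> nat \<Rightarrow> real" where "sg \<theta> i = (if \<theta> i > 0 then 1 else -1)"
definition wr :: "(nat \<Rightarrow> real) \<Rightarrow> action \<Rightarrow> nat \<Rightarrow> real" where "wr \<theta> a i = (1 - a i * sg \<theta> i) / 2"

lemma Theta_i: assumes "\<theta> \<in> Theta d \<gamma> T" "i < d - 1" shows "\<theta> i = eta * sg \<theta> i"
proof -
  have p: "Db / (real d - 1) > 0" using Db_pos dm1 by simp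
  from assms have "\<theta> i = - (Db / (real d - 1)) \<or> \<theta> i = Db / (real d - 1)"
    by (auto simp: Theta_def Db_def)
  then show ?thesis using p by (auto simp: sg_def eta_def)
qed

lemma ip_wr: assumes "\<theta> \<in> Theta d \<gamma> T" shows "ip \<theta> a = Db - 2 * eta * (\<Sum>i<d-1. wr \<theta> a i)"
proof -
  have "ip \<theta> a = (\<Sum>i<d-1. eta - 2 * eta * wr \<theta> a i)"
    unfolding ip_def by (rule sum.cong[OF refl]) (simp add: Theta_i[OF assms] wr_def algebra_simps add_divide_distrib diff_divide_distrib)
  also have "\<dots> = (real d - 1) * eta - 2 * eta * (\<Sum>i<d-1. wr \<theta> a i)"
    using d2 by (simp add: sum_subtractf sum_distrib_left of_nat_diff)
  also have "(real d - 1) * eta = Db" unfolding eta_def using dm1 by simp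
  finally show ?thesis .
qed

lemma wr_01: "a \<in> actions d \<Longrightarrow> i < d - 1 \<Longrightarrow> wr \<theta> a i = 0 \<or> wr \<theta> a i = 1"
  unfolding actions_def wr_def sg_def by auto

lemma sum_wr_bounds: assumes "a \<in> actions d"
  shows "0 \<le> (\<Sum>i<d-1. wr \<theta> a i)" "(\<Sum>i<d-1. wr \<theta> a i) \<le> real d - 1"
proof -
  have w: "\<And>i. i \<in> {..<d-1} \<Longrightarrow> 0 \<le> wr \<theta> a i \<and> wr \<theta> a i \<le> 1"
  proof -
    fix i assume "i \<in> {..<d-1}"
    then have "wr \<theta> a i = 0 \<or> wr \<theta> a i = 1" using wr_01[OF assms] by simp
    then show "0 \<le> wr \<theta> a i \<and> wr \<theta> a i \<le> 1" by auto
  qed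
  show "0 \<le> (\<Sum>i<d-1. wr \<theta> a i)" using w by (intro sum_nonneg) blast
  have "(\<Sum>i<d-1. wr \<theta> a i) \<le> (\<Sum>i<d-1. 1)" using w by (intro sum_mono) blast
  then show "(\<Sum>i<d-1. wr \<theta> a i) \<le> real d - 1" using d2 by (simp add: of_nat_diff)
qed

lemma ip_range: assumes "\<theta> \<in> Theta d \<gamma> T" "a \<in> actions d"
  shows "- Db \<le> ip \<theta> a" "ip \<theta> a \<le> Db"
proof -
  have e: "2 * eta * (real d - 1) = 2 * Db" unfolding eta_def using dm1 by simp
  have "2 * eta * (\<Sum>i<d-1. wr \<theta> a i) \<le> 2 * eta * (real d - 1)"
    using sum_wr_bounds[OF assms(2)] eta_pos by (intro mult_left_mono) auto
  then show "- Db \<le> ip \<theta> a" unfolding ip_wr[OF assms(1)] e by simp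
  have "0 \<le> 2 * eta * (\<Sum>i<d-1. wr \<theta> a i)" using sum_wr_bounds[OF assms(2)] eta_pos by simp
  then show "ip \<theta> a \<le> Db" unfolding ip_wr[OF assms(1)] by simp
qed

definition "ps = dl + Dl"
definition "D1 = 1 / (1 - \<gamma>\<^sup>2 + \<gamma> * ps)"
definition "V0 = \<gamma> * ps * D1 / dl"
definition "V1 = V0 + D1"
definition W :: "state \<Rightarrow> real" where "W s = (if s then V1 else V0)"

lemma ps_le: "ps \<le> (151/150) * dl" using Dl_le_dl by (simp add: ps_def)
lemma ps_pos: "ps > 0" using dl_pos Dl_pos by (simp add: ps_def)
lemma ps_small: "ps \<le> 1/50" using ps_le dl_le by simp
lemma den_pos: "1 - \<gamma>\<^sup>2 + \<gamma> * ps > 0"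
proof -
  have "\<gamma> * \<gamma> < 1 * 1" using g1 g2 by (intro mult_strict_mono) auto
  then have "\<gamma>\<^sup>2 < 1" by (simp add: power2_eq_square)
  then show ?thesis using ps_pos g1 by (simp add: add_pos_pos)
qed
lemma D1_pos: "D1 > 0" using den_pos by (simp add: D1_def)
lemma D1_eq: "D1 * (1 - \<gamma>\<^sup>2 + \<gamma> * ps) = 1" using den_pos by (simp add: D1_def)
lemma V0_nonneg: "V0 \<ge> 0" using D1_pos ps_pos g1 dl_pos by (simp add: V0_def)
lemma V0_eq: "dl * V0 = \<gamma> * ps * D1" using dl_pos by (simp add: V0_def)
lemma W_nonneg: "W s \<ge> 0" using V0_nonneg D1_pos by (simp add: W_def V1_def)
lemma W_le: "W s \<le> V1" using D1_pos by (simp add: W_def V1_def)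

lemma pf_ps: "pf Db = ps" using pf_Db by (simp add: ps_def)

definition ast :: "(nat \<Rightarrow> real) \<Rightarrow> action" where "ast \<theta> = (\<lambda>i. if i < d - 1 then sg \<theta> i else 0)"

lemma ast_act: "ast \<theta> \<in> actions d" by (simp add: ast_def actions_def sg_def)

lemma ip_ast: assumes "\<theta> \<in> Theta d \<gamma> T" shows "ip \<theta> (ast \<theta>) = Db"
proof -
  have "(\<Sum>i<d-1. wr \<theta> (ast \<theta>) i) = 0" by (intro sum.neutral) (simp add: wr_def ast_def sg_def)
  then show ?thesis using ip_wr[OF assms] by simp
qed

lemma EW_F: "E (trans_M d \<gamma> T \<theta> False a) W = V0 + pf (ip \<theta> a) * D1"
  by (simp add: E_bool pmf_x0 pmf_x0F W_def V1_def algebra_simps)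
lemma EW_T: "E (trans_M d \<gamma> T \<theta> True a) W = V1 - dl * D1"
proof -
  have "E (trans_M d \<gamma> T \<theta> True a) W = \<gamma> * V1 + dl * V0"
    by (simp add: E_bool pmf_x1 pmf_x1F W_def)
  also have "\<dots> = V1 - dl * D1" unfolding V1_def dl_def by (simp add: algebra_simps)
  finally show ?thesis .
qed

lemma bell_T: "rw True + \<gamma> * E (trans_M d \<gamma> T \<theta> True a) W = V1"
proof -
  have "1 - \<gamma>\<^sup>2 = dl * (1 + \<gamma>)" by (simp add: dl_def power2_eq_square algebra_simps)
  then have "D1 * (dl * (1 + \<gamma>) + \<gamma> * ps) = 1" using D1_eq by simp
  then have "D1 * dl + D1 * dl * \<gamma> + \<gamma> * ps * D1 = 1" by (simp add: algebra_simps)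
  then have "D1 * dl + D1 * dl * \<gamma> + dl * V0 = 1" using V0_eq by simp
  then have "1 + \<gamma> * (V1 - dl * D1) = V1"
    unfolding V1_def dl_def by algebra
  moreover have "rw True + \<gamma> * E (trans_M d \<gamma> T \<theta> True a) W = 1 + \<gamma> * (V1 - dl * D1)"
    by (simp only: EW_T rw_def if_True)
  ultimately show ?thesis by linarith
qed

lemma gap_F: "W False - rw False - \<gamma> * E (trans_M d \<gamma> T \<theta> False a) W = \<gamma> * (ps - pf (ip \<theta> a)) * D1"
proof -
  have f: "V0 = \<gamma> * (V0 + ps * D1)" using V0_eq unfolding dl_def by algebra
  have e: "W False - rw False - \<gamma> * E (trans_M d \<gamma> T \<theta> False a) W = V0 - \<gamma> * (V0 + pf (ip \<theta> a) * D1)"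
    by (simp add: EW_F W_def rw_def)
  show ?thesis unfolding e using f by algebra
qed

lemma gap_T: "W True - rw True - \<gamma> * E (trans_M d \<gamma> T \<theta> True a) W = 0"
  using bell_T[of \<theta> a] by (simp add: W_def)

lemma wt_eq: "wt \<gamma> u = (1 - \<gamma> ^ Suc u) / dl"
  unfolding wt_def sum_gp0 using g2 by (simp add: dl_def)

lemma sum_wt_lb:
  assumes "\<And>u. u < T \<Longrightarrow> 0 \<le> g u \<and> g u \<le> 1"
  shows "(1/dl) * (\<Sum>u<T. g u) - \<gamma> / dl\<^sup>2 \<le> (\<Sum>u<T. wt \<gamma> u * g u)"
proof -
  have "(\<Sum>u<T. wt \<gamma> u * g u) \<ge> (\<Sum>u<T. g u / dl - \<gamma> ^ Suc u / dl)"
  proof (rule sum_mono)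
    fix u assume "u \<in> {..<T}"
    then have gu: "0 \<le> g u" "g u \<le> 1" using assms by auto
    have "\<gamma> ^ Suc u * g u \<le> \<gamma> ^ Suc u * 1" using gu g1 by (intro mult_left_mono) auto
    then have "g u - \<gamma> ^ Suc u \<le> (1 - \<gamma> ^ Suc u) * g u" by (simp add: algebra_simps)
    then have "(g u - \<gamma> ^ Suc u) / dl \<le> (1 - \<gamma> ^ Suc u) * g u / dl"
      using dl_pos by (intro divide_right_mono) auto
    moreover have "(1 - \<gamma> ^ Suc u) * g u / dl = wt \<gamma> u * g u" unfolding wt_eq by simp
    ultimately show "g u / dl - \<gamma> ^ Suc u / dl \<le> wt \<gamma> u * g u"
      by (simp add: diff_divide_distrib)
  qed
  moreover have "(\<Sum>u<T. g u / dl - \<gamma> ^ Suc u / dl) = (1/dl) * (\<Sum>u<T. g u) - (\<Sum>u<T. \<gamma> ^ Suc u) / dl"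
    by (simp add: sum_subtractf sum_divide_distrib[symmetric] sum_distrib_left)
  moreover have "(\<Sum>u<T. \<gamma> ^ Suc u) \<le> \<gamma> / dl"
  proof -
    have "(\<Sum>u<T. \<gamma> ^ Suc u) = \<gamma> * (\<Sum>u<T. \<gamma> ^ u)" by (simp add: sum_distrib_left)
    also have "\<dots> = \<gamma> * ((1 - \<gamma> ^ T) / dl)" unfolding sum_gp_strict using g2 by (simp add: dl_def)
    also have "\<dots> \<le> \<gamma> * (1 / dl)"
      using g1 dl_pos by (intro mult_left_mono divide_right_mono) auto
    finally show ?thesis by simp
  qed
  then have "(\<Sum>u<T. \<gamma> ^ Suc u) / dl \<le> \<gamma> / dl / dl" using dl_pos by (intro divide_right_mono) auto
  ultimately show ?thesis by (simp add: power2_eq_square)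
qed

definition Xs :: "(nat \<Rightarrow> real) \<Rightarrow> nat \<Rightarrow> history \<Rightarrow> real" where
  "Xs \<theta> i \<tau> = (\<Sum>u<T. if fst (\<tau>!u) then 0 else wr \<theta> (snd (\<tau>!u)) i)"


definition fl :: "nat \<Rightarrow> (nat \<Rightarrow> real) \<Rightarrow> (nat \<Rightarrow> real)" where "fl i \<theta> = \<theta>(i := - \<theta> i)"

lemma fl_fl: "fl i (fl i \<theta>) = \<theta>" by (simp add: fl_def)

lemma fl_Theta: assumes "\<theta> \<in> Theta d \<gamma> T" "i < d - 1" shows "fl i \<theta> \<in> Theta d \<gamma> T"
  using assms unfolding Theta_def fl_def by auto

lemma sg_fl: assumes "\<theta> \<in> Theta d \<gamma> T" "i < d - 1" shows "sg (fl i \<theta>) i = - sg \<theta> i"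
proof -
  have "\<theta> i = eta * sg \<theta> i" by (rule Theta_i[OF assms])
  then show ?thesis using eta_pos by (auto simp: sg_def fl_def split: if_splits)
qed

lemma wr_fl: assumes "\<theta> \<in> Theta d \<gamma> T" "i < d - 1" shows "wr (fl i \<theta>) a i = 1 - wr \<theta> a i"
  unfolding wr_def sg_fl[OF assms] by (simp add: field_simps)

definition M0 :: "history \<Rightarrow> real" where "M0 \<tau> = (\<Sum>u<T. if fst (\<tau>!u) then 0 else 1)"

lemma Xs_fl: assumes "\<theta> \<in> Theta d \<gamma> T" "i < d - 1" shows "Xs (fl i \<theta>) i \<tau> = M0 \<tau> - Xs \<theta> i \<tau>"
  unfolding Xs_def M0_def wr_fl[OF assms] sum_subtractf[symmetric] by (rule sum.cong) auto

lemma ip_fl: assumes "i < d - 1" shows "ip (fl i \<theta>) a = ip \<theta> a - 2 * (a i * \<theta> i)"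
proof -
  have "ip (fl i \<theta>) a = (\<Sum>j<d-1. a j * \<theta> j - (if j = i then 2 * (a i * \<theta> i) else 0))"
    unfolding ip_def fl_def by (intro sum.cong) auto
  also have "\<dots> = ip \<theta> a - 2 * (a i * \<theta> i)"
    using assms by (simp add: sum_subtractf ip_def)
  finally show ?thesis .
qed

lemma abs_ai: assumes "\<theta> \<in> Theta d \<gamma> T" "i < d - 1" "a \<in> actions d" shows "\<bar>a i * \<theta> i\<bar> = eta"
proof -
  have "a i = 1 \<or> a i = -1" using assms(2,3) by (auto simp: actions_def)
  then show ?thesis unfolding Theta_i[OF assms(1,2)] using eta_pos by (auto simp: sg_def abs_mult)
qed

lemma pmf_KK_pos: "pmf (trans_M d \<gamma> T \<theta> s a) s' > 0"
  using pf_pos[of "ip \<theta> a"] pf_lt1[of "ip \<theta> a"] dl_pos g1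
  by (cases s; cases s') (auto simp: pmf_x0 pmf_x0F pmf_x1 pmf_x1F)

lemma chi_ident: fixes p q :: real assumes "0 < p" "p < 1" shows "q * (q / p) + (1 - q) * ((1 - q) / (1 - p)) = 1 + (q - p)\<^sup>2 / (p * (1 - p))"
proof -
  have n: "1 - p \<noteq> 0" "p \<noteq> 0" using assms by auto
  have "q * (q / p) + (1 - q) * ((1 - q) / (1 - p)) = (q\<^sup>2 * (1 - p) + (1 - q)\<^sup>2 * p) / (p * (1 - p))"
    using n by (simp add: field_simps power2_eq_square)
  also have "q\<^sup>2 * (1 - p) + (1 - q)\<^sup>2 * p = p * (1 - p) + (q - p)\<^sup>2"
    by (simp add: power2_eq_square algebra_simps)
  also have "(p * (1 - p) + (q - p)\<^sup>2) / (p * (1 - p)) = 1 + (q - p)\<^sup>2 / (p * (1 - p))"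
    using n by (simp add: add_divide_distrib)
  finally show ?thesis .
qed

lemma pf_close: assumes "- Db \<le> x" "x \<le> Db" "- Db \<le> y" "y \<le> Db" "\<bar>y - x\<bar> \<le> 2 * eta"
  shows "(pf y - pf x)\<^sup>2 \<le> (2 * eta * ps)\<^sup>2"
proof -
  have "\<bar>pf y - pf x\<bar> \<le> 2 * eta * ps"
  proof (cases "x \<le> y")
    case True
    have "pf y - pf x \<le> (y - x) * pf y" by (rule pf_diff[OF True])
    also have "\<dots> \<le> (2 * eta) * ps"
      using assms True pf_mono[OF assms(4)] pf_pos[of y] unfolding pf_ps by (intro mult_mono) auto
    finally show ?thesis using pf_mono[OF True] by simp
  next
    case False
    then have F: "y \<le> x" by simp
    have "pf x - pf y \<le> (x - y) * pf x" by (rule pf_diff[OF F])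
    also have "\<dots> \<le> (2 * eta) * ps"
      using assms F pf_mono[OF assms(2)] pf_pos[of x] unfolding pf_ps by (intro mult_mono) auto
    finally show ?thesis using pf_mono[OF F] by simp
  qed
  then show ?thesis using eta_pos ps_pos by (intro power2_le_iff_abs_le[THEN iffD2]) auto
qed

lemma chi_bound:
  assumes th: "\<theta> \<in> Theta d \<gamma> T" and i: "i < d - 1" and a: "a \<in> actions d"
  shows "E (trans_M d \<gamma> T (fl i \<theta>) s a) (\<lambda>s'. rho (trans_M d \<gamma> T \<theta>) (trans_M d \<gamma> T (fl i \<theta>)) s a s')
         \<le> 1 + 1 / (17 * real T)"
proof (cases s)
  case True
  have "\<And>s'. rho (trans_M d \<gamma> T \<theta>) (trans_M d \<gamma> T (fl i \<theta>)) True a s' = 1"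
    unfolding rho_def using g1 dl_pos by (case_tac s') (simp_all add: pmf_x1 pmf_x1F)
  then show ?thesis using True T_pos by simp
next
  case False
  let ?x = "ip \<theta> a" and ?y = "ip (fl i \<theta>) a"
  let ?p = "pf ?x" and ?q = "pf ?y"
  have th': "fl i \<theta> \<in> Theta d \<gamma> T" by (rule fl_Theta[OF th i])
  have e: "E (trans_M d \<gamma> T (fl i \<theta>) s a) (\<lambda>s'. rho (trans_M d \<gamma> T \<theta>) (trans_M d \<gamma> T (fl i \<theta>)) s a s')
     = ?q * (?q / ?p) + (1 - ?q) * ((1 - ?q) / (1 - ?p))"
    using False by (simp add: E_bool rho_def pmf_x0 pmf_x0F)
  have yx: "\<bar>?y - ?x\<bar> \<le> 2 * eta" unfolding ip_fl[OF i] using abs_ai[OF th i a] by simp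
  have cl: "(?q - ?p)\<^sup>2 \<le> (2 * eta * ps)\<^sup>2"
    by (rule pf_close) (use ip_range[OF th a] ip_range[OF th' a] yx in auto)
  have pp: "?p * (1 - ?p) \<ge> ((9/10) * dl) * (49/50)"
  proof (rule mult_mono)
    show "(9/10) * dl \<le> ?p" using pf_min pf_mono ip_range[OF th a] by (meson order_trans)
    have "?p \<le> ps" unfolding pf_ps[symmetric] using pf_mono ip_range[OF th a] by auto
    then show "49/50 \<le> 1 - ?p" using ps_small by simp
  qed (use pf_pos[of ?x] in auto)
  have "(?q - ?p)\<^sup>2 / (?p * (1 - ?p)) \<le> (2 * eta * ps)\<^sup>2 / (((9/10) * dl) * (49/50))"
    using cl pp dl_pos by (intro frac_le) auto
  also have "\<dots> = 4 * eta\<^sup>2 * ps\<^sup>2 / ((441/500) * dl)" by (simp add: power2_eq_square)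
  also have "\<dots> \<le> 4 * (1 / (500 * real T * dl)) * ((151/150) * dl)\<^sup>2 / ((441/500) * dl)"
    using eta_sq ps_le ps_pos dl_pos
    by (intro divide_right_mono mult_mono mult_left_mono power_mono) auto
  also have "\<dots> = (4 * (151/150)\<^sup>2 / 441) / real T"
    using dl_pos T_pos by (simp add: power2_eq_square field_simps)
  also have "\<dots> \<le> 1 / (17 * real T)" using T_pos by (simp add: power2_eq_square field_simps)
  finally have "(?q - ?p)\<^sup>2 / (?p * (1 - ?p)) \<le> 1 / (17 * real T)" .
  moreover have "?q * (?q / ?p) + (1 - ?q) * ((1 - ?q) / (1 - ?p)) = 1 + (?q - ?p)\<^sup>2 / (?p * (1 - ?p))"
    by (rule chi_ident[OF pf_pos[of ?x] pf_lt1[of ?x]])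
  ultimately show ?thesis using e by linarith
qed

lemma cT_bound: "(1 + 1 / (17 * real T)) ^ T \<le> 17/16"
proof -
  have "(1 + 1 / (17 * real T)) ^ T \<le> exp (1 / (17 * real T)) ^ T"
    using T_pos by (intro power_mono) (auto simp: exp_ge_add_one_self[of "1 / (17 * real T)", simplified add.commute])
  also have "\<dots> = exp (real T * (1 / (17 * real T)))" by (rule exp_of_nat_mult[symmetric])
  also have "\<dots> = exp (1/17)"
  proof -
    have "real T * (1 / (17 * real T)) = 1/17" using T_pos by simp
    then show ?thesis by (simp only:)
  qed
  also have "\<dots> \<le> 17/16"
  proof -
    have "1 + (- 1/17) \<le> exp (- 1/17 :: real)" by (rule exp_ge_add_one_self)
    then have "16/17 \<le> exp (- 1/17 :: real)" by simp
    moreover have "exp (1/17 :: real) = 1 / exp (- 1/17)" by (simp add: exp_minus inverse_eq_divide)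
    ultimately show ?thesis by (simp add: divide_le_eq)
  qed
  finally show ?thesis .
qed

lemma info:
  assumes v: "valid_policy d \<pi>" and th: "\<theta> \<in> Theta d \<gamma> T" and i: "i < d - 1"
  shows "real T / 5 \<le> E (traj \<pi> (trans_M d \<gamma> T \<theta>) T [] False) (Xs \<theta> i)
                    + E (traj \<pi> (trans_M d \<gamma> T (fl i \<theta>)) T [] False) (Xs (fl i \<theta>) i)"
proof -
  let ?K = "trans_M d \<gamma> T \<theta>" and ?K' = "trans_M d \<gamma> T (fl i \<theta>)"
  let ?P = "traj \<pi> ?K T [] False" and ?Q = "traj \<pi> ?K' T [] False"
  let ?H = "Xs (fl i \<theta>) i"
  have pos: "\<And>s a s'. a \<in> actions d \<Longrightarrow> pmf (?K s a) s' > 0" by (rule pmf_KK_pos)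
  have th': "fl i \<theta> \<in> Theta d \<gamma> T" by (rule fl_Theta[OF th i])
  have Hb: "\<bar>?H \<tau>\<bar> \<le> real T" if t: "\<tau> \<in> set_pmf ?P" for \<tau>
  proof -
    have w: "\<And>u. u \<in> {..<T} \<Longrightarrow> 0 \<le> (if fst (\<tau>!u) then 0 else wr (fl i \<theta>) (snd (\<tau>!u)) i)
       \<and> (if fst (\<tau>!u) then 0 else wr (fl i \<theta>) (snd (\<tau>!u)) i) \<le> 1"
    proof -
      fix u assume "u \<in> {..<T}"
      then have "snd (\<tau>!u) \<in> actions d" using traj_support[OF v t] by auto
      then have "wr (fl i \<theta>) (snd (\<tau>!u)) i = 0 \<or> wr (fl i \<theta>) (snd (\<tau>!u)) i = 1" using wr_01 i by blast
      then show "0 \<le> (if fst (\<tau>!u) then 0 else wr (fl i \<theta>) (snd (\<tau>!u)) i)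
       \<and> (if fst (\<tau>!u) then 0 else wr (fl i \<theta>) (snd (\<tau>!u)) i) \<le> 1" by auto
    qed
    have "0 \<le> ?H \<tau>" unfolding Xs_def using w by (intro sum_nonneg) blast
    moreover have "?H \<tau> \<le> (\<Sum>u<T. 1)" unfolding Xs_def using w by (intro sum_mono) blast
    ultimately show ?thesis by simp
  qed
  have l: "(0::real) < 1 / (4 * real T)" using T_pos by simp
  have tv: "E ?P ?H - E ?Q ?H \<le> (1 / (4 * real T) * (real T)\<^sup>2 + (E ?Q (lr ?K ?K') - 1) / (1 / (4 * real T))) / 2"
    by (rule tv_bound[OF v pos Hb l])
  have mom: "E ?Q (lr ?K ?K') \<le> (1 + 1 / (17 * real T)) ^ T"
    by (rule lr_moment[OF v pos]) (use T_pos chi_bound[OF th i] in auto)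
  then have mom': "E ?Q (lr ?K ?K') - 1 \<le> 1/16" using cT_bound by simp
  have "(1 / (4 * real T) * (real T)\<^sup>2 + (E ?Q (lr ?K ?K') - 1) / (1 / (4 * real T))) / 2
      = real T / 8 + 2 * real T * (E ?Q (lr ?K ?K') - 1)"
    using T_pos by (simp add: power2_eq_square field_simps)
  also have "\<dots> \<le> real T / 8 + 2 * real T * (1/16)"
    using mom' T_pos by (intro add_left_mono mult_left_mono) auto
  finally have tv': "E ?P ?H - E ?Q ?H \<le> real T / 4" using tv by simp
  have occ: "(9/20) * real T - (if False then (9/20) / dl else 0) \<le> Psi \<pi> ?K 1 (\<lambda>s a. if s then 0 else 1) T [] False"
  proof (rule occupancy[OF v])
    fix a assume a: "a \<in> actions d"
    show "pmf (?K False a) True \<le> ps" unfolding pmf_x0 pf_ps[symmetric] by (intro pf_mono ip_range[OF th a])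
    show "dl \<le> pmf (?K True a) False" by (simp add: pmf_x1F)
  next
    show "ps * ((9/20) / dl) \<le> 1 - 9/20"
    proof -
      have "ps * ((9/20) / dl) \<le> ((151/150) * dl) * ((9/20) / dl)"
        using ps_le dl_pos by (intro mult_right_mono) auto
      also have "\<dots> = (151/150) * (9/20)" using dl_pos by simp
      finally show ?thesis by simp
    qed
    show "9/20 \<le> dl * ((9/20) / dl)" using dl_pos by simp
  qed (use dl_pos in auto)
  have "Psi \<pi> ?K 1 (\<lambda>s a. if s then 0 else 1) T [] False = E ?P M0"
    unfolding Psi_def[OF v] M0_def by simp
  then have occ': "(9/20) * real T \<le> E ?P M0" using occ by simp
  have "E ?P (Xs \<theta> i) + E ?P ?H = E ?P M0"
    unfolding Xs_fl[OF th i] using integ[OF v] by (simp add: Bochner_Integration.integral_diff)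
  then show ?thesis using tv' occ' by linarith
qed

definition "A0 = \<gamma> * D1 * (1 - ps) * ((9/10) * dl) * (2 * eta)"

lemma A0_nonneg: "A0 \<ge> 0"
  unfolding A0_def using g1 D1_pos ps_small dl_pos eta_pos by simp

context
  fixes \<theta> assumes th: "\<theta> \<in> Theta d \<gamma> T"
begin

abbreviation "KK \<equiv> trans_M d \<gamma> T \<theta>"

lemma superh_W: "superh d KK \<gamma> W"
  unfolding superh_def
proof (intro conjI allI impI)
  fix s show "0 \<le> W s" by (rule W_nonneg)
next
  fix s a assume a: "a \<in> actions d"
  show "rw s + \<gamma> * E (KK s a) W \<le> W s"
  proof (cases s)
    case True then show ?thesis using bell_T[of \<theta> a] by (simp add: W_def)
  next
    case False
    have "pf (ip \<theta> a) \<le> ps" unfolding pf_ps[symmetric] by (intro pf_mono ip_range[OF th a])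
    then have "0 \<le> \<gamma> * (ps - pf (ip \<theta> a)) * D1" using g1 D1_pos by simp
    then show ?thesis using gap_F[of \<theta> a] False by simp
  qed
qed

lemma Weq: "W s = rw s + \<gamma> * E (KK s (ast \<theta>)) W"
proof (cases s)
  case True then show ?thesis using bell_T[of \<theta> "ast \<theta>"] by (simp add: W_def)
next
  case False then show ?thesis using gap_F[of \<theta> "ast \<theta>"] ip_ast[OF th] pf_ps by simp
qed

lemma Vstar_W: "Vstar d KK \<gamma> s = W s"
  by (rule Vstar_eq[OF superh_W ast_act Weq W_le]) (use g1 g2 in auto)

definition gg :: "state \<Rightarrow> action \<Rightarrow> real" where "gg s a = W s - rw s - \<gamma> * E (KK s a) W"

lemma regret_Phi:
  assumes v: "valid_policy d \<pi>"
  shows "expected_regret d KK \<gamma> \<pi> False T = Phi \<pi> KK (\<lambda>h s. W s - Vpi \<pi> KK \<gamma> h s) T [] False"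
  unfolding expected_regret_def Phi_def[OF v] Vstar_W
  by (simp add: sum_subtractf)

lemma regret_Thw:
  assumes v: "valid_policy d \<pi>"
  shows "Thw \<pi> KK \<gamma> gg T [] False \<le> expected_regret d KK \<gamma> \<pi> False T"
  unfolding regret_Phi[OF v] gg_def
  by (rule Thw_le_Phi[OF v D_step[OF v superh_W]]) (use g1 Vpi_le_W[OF v superh_W] in auto)

lemma gg_T: "gg True a = 0" unfolding gg_def by (rule gap_T)
lemma gg_F: "gg False a = \<gamma> * (ps - pf (ip \<theta> a)) * D1" unfolding gg_def by (rule gap_F)

lemma gg_bounds: assumes a: "a \<in> actions d" shows "0 \<le> gg s a" "gg s a \<le> 1"
proof -
  have p: "pf (ip \<theta> a) \<le> ps" unfolding pf_ps[symmetric] by (intro pf_mono ip_range[OF th a])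
  show "0 \<le> gg s a" by (cases s) (use p g1 D1_pos in \<open>auto simp: gg_T gg_F\<close>)
  have "\<gamma> * (ps - pf (ip \<theta> a)) * D1 \<le> \<gamma> * ps * D1"
    using pf_pos[of "ip \<theta> a"] g1 D1_pos by (intro mult_right_mono mult_left_mono) auto
  also have "\<gamma> * ps * D1 \<le> 1"
  proof -
    have "\<gamma>\<^sup>2 \<le> 1" using g1 g2 by (simp add: power2_eq_square mult_le_one)
    then have "\<gamma> * ps * D1 \<le> (1 - \<gamma>\<^sup>2 + \<gamma> * ps) * D1" using D1_pos by (intro mult_right_mono) auto
    then show ?thesis using D1_eq by (simp add: mult.commute)
  qed
  finally show "gg s a \<le> 1" by (cases s) (auto simp: gg_T gg_F)
qed


lemma gg_lb: assumes a: "a \<in> actions d"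
  shows "A0 * (if s then 0 else (\<Sum>i<d-1. wr \<theta> a i)) \<le> gg s a"
proof (cases s)
  case True then show ?thesis using gg_bounds[OF a] by simp
next
  case False
  let ?x = "ip \<theta> a" and ?S = "(\<Sum>i<d-1. wr \<theta> a i)"
  have r: "- Db \<le> ?x" "?x \<le> Db" using ip_range[OF th a] by auto
  have dx: "Db - ?x = 2 * eta * ?S" using ip_wr[OF th] by simp
  have S: "0 \<le> ?S" using sum_wr_bounds[OF a] by simp
  have "(1 - ps) * ((9/10) * dl) * (2 * eta * ?S) \<le> (1 - pf Db) * pf ?x * (Db - ?x)"
    unfolding dx pf_ps
    using pf_mono[OF r(1)] pf_min ps_small S eta_pos
    by (intro mult_right_mono mult_left_mono) auto
  also have "\<dots> \<le> pf Db - pf ?x" by (rule pf_gap[OF r(2)])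
  finally have "(1 - ps) * ((9/10) * dl) * (2 * eta * ?S) \<le> ps - pf ?x" unfolding pf_ps .
  then have "\<gamma> * D1 * ((1 - ps) * ((9/10) * dl) * (2 * eta * ?S)) \<le> \<gamma> * D1 * (ps - pf ?x)"
    using g1 D1_pos by (intro mult_left_mono) auto
  then show ?thesis using False by (simp add: gg_F A0_def mult_ac)
qed


lemma regret_lb:
  assumes v: "valid_policy d \<pi>"
  shows "(A0 / dl) * (\<Sum>i<d-1. E (traj \<pi> KK T [] False) (Xs \<theta> i)) - \<gamma> / dl\<^sup>2
         \<le> expected_regret d KK \<gamma> \<pi> False T"
proof -
  let ?P = "traj \<pi> KK T [] False"
  have sup: "\<And>\<tau> u. \<tau> \<in> set_pmf ?P \<Longrightarrow> u < T \<Longrightarrow> snd (\<tau>!u) \<in> actions d"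
    using traj_support[OF v] by blast
  have "E ?P (\<lambda>\<tau>. (1/dl) * (A0 * (\<Sum>i<d-1. Xs \<theta> i \<tau>)) - \<gamma> / dl\<^sup>2)
        \<le> E ?P (\<lambda>\<tau>. \<Sum>u<T. wt \<gamma> u * gg (fst (\<tau>!u)) (snd (\<tau>!u)))"
  proof (rule integral_mono_AE)
    show "AE \<tau> in measure_pmf ?P. (1/dl) * (A0 * (\<Sum>i<d-1. Xs \<theta> i \<tau>)) - \<gamma> / dl\<^sup>2
        \<le> (\<Sum>u<T. wt \<gamma> u * gg (fst (\<tau>!u)) (snd (\<tau>!u)))"
    proof (unfold AE_measure_pmf_iff, intro ballI)
      fix \<tau> assume t: "\<tau> \<in> set_pmf ?P"
      have "A0 * (\<Sum>i<d-1. Xs \<theta> i \<tau>) = (\<Sum>u<T. A0 * (if fst (\<tau>!u) then 0 else (\<Sum>i<d-1. wr \<theta> (snd (\<tau>!u)) i)))"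
      proof -
        have "(\<Sum>i<d-1. Xs \<theta> i \<tau>) = (\<Sum>u<T. (if fst (\<tau>!u) then 0 else (\<Sum>i<d-1. wr \<theta> (snd (\<tau>!u)) i)))"
          unfolding Xs_def by (subst sum.swap) (rule sum.cong[OF refl], simp)
        then show ?thesis by (simp add: sum_distrib_left)
      qed
      also have "\<dots> \<le> (\<Sum>u<T. gg (fst (\<tau>!u)) (snd (\<tau>!u)))"
        by (intro sum_mono gg_lb sup[OF t]) auto
      finally have "(1/dl) * (A0 * (\<Sum>i<d-1. Xs \<theta> i \<tau>)) \<le> (1/dl) * (\<Sum>u<T. gg (fst (\<tau>!u)) (snd (\<tau>!u)))"
        using dl_pos by (intro mult_left_mono) auto
      also have "(1/dl) * (\<Sum>u<T. gg (fst (\<tau>!u)) (snd (\<tau>!u))) - \<gamma> / dl\<^sup>2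
          \<le> (\<Sum>u<T. wt \<gamma> u * gg (fst (\<tau>!u)) (snd (\<tau>!u)))"
        by (rule sum_wt_lb) (use gg_bounds sup[OF t] in blast)
      finally show "(1/dl) * (A0 * (\<Sum>i<d-1. Xs \<theta> i \<tau>)) - \<gamma> / dl\<^sup>2
        \<le> (\<Sum>u<T. wt \<gamma> u * gg (fst (\<tau>!u)) (snd (\<tau>!u)))" by linarith
    qed
  qed (auto intro: integ[OF v])
  also have "\<dots> = Thw \<pi> KK \<gamma> gg T [] False" by (simp add: Thw_def[OF v])
  also have "\<dots> \<le> expected_regret d KK \<gamma> \<pi> False T" by (rule regret_Thw[OF v])
  finally have r: "E ?P (\<lambda>\<tau>. (1/dl) * (A0 * (\<Sum>i<d-1. Xs \<theta> i \<tau>)) - \<gamma> / dl\<^sup>2) \<le> expected_regret d KK \<gamma> \<pi> False T" .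
  have "E ?P (\<lambda>\<tau>. (1/dl) * (A0 * (\<Sum>i<d-1. Xs \<theta> i \<tau>)) - \<gamma> / dl\<^sup>2)
      = (1/dl) * (A0 * (\<Sum>i<d-1. E ?P (Xs \<theta> i))) - \<gamma> / dl\<^sup>2"
    using integ[OF v]
    by (simp add: Bochner_Integration.integral_diff integral_mult_right integral_sum)
  then show ?thesis using r by simp
qed

end
end


context model begin

lemma finite_Theta: "finite (Theta d \<gamma> T)"
proof -
  let ?x = "Deltabar d \<gamma> T / (real d - 1)"
  have "Theta d \<gamma> T \<subseteq> (\<lambda>f i. if i < d - 1 then f i else 0) ` (PiE {..<d-1} (\<lambda>_. {- ?x, ?x}))"
  proof
    fix \<theta> assume a: "\<theta> \<in> Theta d \<gamma> T"
    show "\<theta> \<in> (\<lambda>f i. if i < d - 1 then f i else 0) ` (PiE {..<d-1} (\<lambda>_. {- ?x, ?x}))"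
    proof
      show "restrict \<theta> {..<d-1} \<in> PiE {..<d-1} (\<lambda>_. {- ?x, ?x})" using a by (auto simp: Theta_def)
      show "\<theta> = (\<lambda>i. if i < d - 1 then restrict \<theta> {..<d-1} i else 0)" using a
        by (auto simp: Theta_def fun_eq_iff)
    qed
  qed
  moreover have "finite (PiE {..<d-1} (\<lambda>_. {- ?x, ?x}))" by (intro finite_PiE) auto
  ultimately show ?thesis using finite_subset by blast
qed

lemma Theta_ne: "Theta d \<gamma> T \<noteq> {}"
proof -
  have "(\<lambda>i. if i < d - 1 then Deltabar d \<gamma> T / (real d - 1) else 0) \<in> Theta d \<gamma> T"
    by (simp add: Theta_def)
  then show ?thesis by blast
qed

lemma bij_fl: "i < d - 1 \<Longrightarrow> bij_betw (fl i) (Theta d \<gamma> T) (Theta d \<gamma> T)"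
  by (rule bij_betw_byWitness[where f'="fl i"]) (auto simp: fl_fl fl_Theta)

lemma avg_info:
  assumes v: "valid_policy d \<pi>" and i: "i < d - 1"
  shows "real (card (Theta d \<gamma> T)) * (real T / 10) \<le>
    (\<Sum>\<theta>\<in>Theta d \<gamma> T. E (traj \<pi> (trans_M d \<gamma> T \<theta>) T [] False) (Xs \<theta> i))"
proof -
  let ?F = "\<lambda>\<theta>. E (traj \<pi> (trans_M d \<gamma> T \<theta>) T [] False) (Xs \<theta> i)"
  have r: "(\<Sum>\<theta>\<in>Theta d \<gamma> T. ?F (fl i \<theta>)) = (\<Sum>\<theta>\<in>Theta d \<gamma> T. ?F \<theta>)"
    by (rule sum.reindex_bij_betw[OF bij_fl[OF i]])
  have "(\<Sum>\<theta>\<in>Theta d \<gamma> T. real T / 5) \<le> (\<Sum>\<theta>\<in>Theta d \<gamma> T. ?F \<theta> + ?F (fl i \<theta>))"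
    by (intro sum_mono info[OF v _ i])
  also have "\<dots> = 2 * (\<Sum>\<theta>\<in>Theta d \<gamma> T. ?F \<theta>)" by (simp add: sum.distrib r)
  finally show ?thesis by simp
qed

definition "BND = (A0 / dl) * ((real d - 1) * (real T / 10)) - \<gamma> / dl\<^sup>2"

lemma exists_theta:
  assumes v: "valid_policy d \<pi>"
  shows "\<exists>\<theta>\<in>Theta d \<gamma> T. BND \<le> expected_regret d (trans_M d \<gamma> T \<theta>) \<gamma> \<pi> False T"
proof (rule ccontr)
  assume "\<not> ?thesis"
  then have lt: "\<And>\<theta>. \<theta> \<in> Theta d \<gamma> T \<Longrightarrow> expected_regret d (trans_M d \<gamma> T \<theta>) \<gamma> \<pi> False T < BND" by force
  let ?N = "real (card (Theta d \<gamma> T))"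
  have "(\<Sum>\<theta>\<in>Theta d \<gamma> T. expected_regret d (trans_M d \<gamma> T \<theta>) \<gamma> \<pi> False T) < (\<Sum>\<theta>\<in>Theta d \<gamma> T. BND)"
    using finite_Theta Theta_ne lt by (intro sum_strict_mono) auto
  also have "\<dots> = ?N * BND" by simp
  also have "\<dots> \<le> (\<Sum>\<theta>\<in>Theta d \<gamma> T. (A0 / dl) * (\<Sum>i<d-1. E (traj \<pi> (trans_M d \<gamma> T \<theta>) T [] False) (Xs \<theta> i)) - \<gamma> / dl\<^sup>2)"
  proof -
    have "?N * ((real d - 1) * (real T / 10)) = (\<Sum>i<d-1. ?N * (real T / 10))"
      using d2 by (simp add: of_nat_diff)
    also have "\<dots> \<le> (\<Sum>i<d-1. \<Sum>\<theta>\<in>Theta d \<gamma> T. E (traj \<pi> (trans_M d \<gamma> T \<theta>) T [] False) (Xs \<theta> i))"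
      by (intro sum_mono avg_info[OF v]) auto
    also have "\<dots> = (\<Sum>\<theta>\<in>Theta d \<gamma> T. \<Sum>i<d-1. E (traj \<pi> (trans_M d \<gamma> T \<theta>) T [] False) (Xs \<theta> i))"
      by (rule sum.swap)
    finally have s: "?N * ((real d - 1) * (real T / 10)) \<le> (\<Sum>\<theta>\<in>Theta d \<gamma> T. \<Sum>i<d-1. E (traj \<pi> (trans_M d \<gamma> T \<theta>) T [] False) (Xs \<theta> i))" .
    have A: "A0 / dl \<ge> 0" using A0_nonneg dl_pos by simp
    have "?N * BND = (A0 / dl) * (?N * ((real d - 1) * (real T / 10))) - ?N * (\<gamma> / dl\<^sup>2)"
      by (simp add: BND_def algebra_simps)
    also have "\<dots> \<le> (A0 / dl) * (\<Sum>\<theta>\<in>Theta d \<gamma> T. \<Sum>i<d-1. E (traj \<pi> (trans_M d \<gamma> T \<theta>) T [] False) (Xs \<theta> i)) - ?N * (\<gamma> / dl\<^sup>2)"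
      using s A by (intro diff_right_mono mult_left_mono) auto
    also have "\<dots> = (\<Sum>\<theta>\<in>Theta d \<gamma> T. (A0 / dl) * (\<Sum>i<d-1. E (traj \<pi> (trans_M d \<gamma> T \<theta>) T [] False) (Xs \<theta> i)) - \<gamma> / dl\<^sup>2)"
      by (simp add: sum_subtractf sum_distrib_left)
    finally show ?thesis .
  qed
  also have "\<dots> \<le> (\<Sum>\<theta>\<in>Theta d \<gamma> T. expected_regret d (trans_M d \<gamma> T \<theta>) \<gamma> \<pi> False T)"
    by (intro sum_mono regret_lb[OF _ v])
  finally show False by simp
qed


lemma D1_lb: "D1 \<ge> 150 / (451 * dl)"
proof -
  have "1 - \<gamma>\<^sup>2 = dl * (1 + \<gamma>)" by (simp add: dl_def power2_eq_square algebra_simps)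
  also have "\<dots> \<le> dl * 2" using dl_pos g2 by (intro mult_left_mono) auto
  finally have a: "1 - \<gamma>\<^sup>2 \<le> 2 * dl" by simp
  have "\<gamma> * ps \<le> 1 * ps" using g2 ps_pos by (intro mult_right_mono) auto
  then have b: "\<gamma> * ps \<le> (151/150) * dl" using ps_le by simp
  have "1 - \<gamma>\<^sup>2 + \<gamma> * ps \<le> (451/150) * dl" using a b by simp
  then have "1 / ((451/150) * dl) \<le> 1 / (1 - \<gamma>\<^sup>2 + \<gamma> * ps)"
    using den_pos by (intro divide_left_mono) auto
  then show ?thesis by (simp add: D1_def)
qed

lemma Db_lb': "Db \<ge> (150/151) * (Dl / dl)"
proof -
  have "Dl / ((151/150) * dl) \<le> Dl / (dl + Dl)"
    using Dl_pos dl_pos Dl_le_dl by (intro divide_left_mono) auto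
  then show ?thesis using Db_lb by simp
qed

lemma main_num1: "(A0 / dl) * ((real d - 1) * (real T / 10)) \<ge> \<gamma> * (Dl * real T) / (20 * dl\<^sup>2)"
proof -
  have eA: "(A0 / dl) * ((real d - 1) * (real T / 10)) = \<gamma> * real T * (9/50) * (D1 * (1 - ps) * Db)"
    unfolding A0_def eta_def using dm1 dl_pos by (simp add: field_simps)
  have k: "D1 * (1 - ps) * Db \<ge> (150 / (451 * dl)) * (49/50) * ((150/151) * (Dl / dl))"
    using D1_lb Db_lb' ps_small dl_pos Dl_pos D1_pos
    by (intro mult_mono) auto
  have "\<gamma> * (Dl * real T) / (20 * dl\<^sup>2) = (\<gamma> * (Dl * real T) / dl\<^sup>2) * (1/20)" by simp
  also have "\<dots> \<le> (\<gamma> * (Dl * real T) / dl\<^sup>2) * ((9/50) * (150/451) * (49/50) * (150/151))"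
    using g1 Dl_pos T_pos dl_pos by (intro mult_left_mono) auto
  also have "\<dots> = \<gamma> * real T * (9/50) * ((150 / (451 * dl)) * (49/50) * ((150/151) * (Dl / dl)))"
    using dl_pos by (simp add: power2_eq_square field_simps)
  also have "\<dots> \<le> \<gamma> * real T * (9/50) * (D1 * (1 - ps) * Db)"
    using g1 T_pos k by (intro mult_left_mono) auto
  also have "\<dots> = (A0 / dl) * ((real d - 1) * (real T / 10))" by (rule eA[symmetric])
  finally show ?thesis .
qed

lemma main_num2: "Dl * real T \<ge> (real d - 1) * sqrt (real T) * sqrt dl / 29"
proof -
  define st where "st = sqrt (real T)"
  define sd where "sd = sqrt dl"
  have st: "st > 0" "st\<^sup>2 = real T" using T_pos by (auto simp: st_def)
  have sd: "sd > 0" "sd\<^sup>2 = dl" using dl_pos by (auto simp: sd_def)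
  have "SS \<le> sqrt ((29/45)\<^sup>2 * (real T / dl))"
    unfolding SS_def dl_def[symmetric] real_sqrt_le_iff
  proof -
    have "(2/5) * (real T / dl) * ln 2 \<le> (2/5) * (real T / dl) * 1"
      using ln_2_less_1 T_pos dl_pos by (intro mult_left_mono) auto
    also have "\<dots> \<le> (29/45)\<^sup>2 * (real T / dl)"
      using T_pos dl_pos mult_right_mono[of "2/5" "(29/45)\<^sup>2" "real T / dl"] by (simp add: power2_eq_square)
    finally show "(2/5) * (real T / dl) * ln 2 \<le> (29/45)\<^sup>2 * (real T / dl)" .
  qed
  also have "\<dots> = (29/45) * (st / sd)"
    unfolding st_def sd_def using T_pos dl_pos by (simp add: real_sqrt_mult real_sqrt_divide)
  finally have SSb: "SS \<le> (29/45) * (st / sd)" .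
  have "(real d - 1) / (45 * ((29/45) * (st / sd))) \<le> Dl"
    unfolding Dl_eq using SS_pos SSb dm1 st sd by (intro divide_left_mono mult_left_mono) auto
  then have "(real d - 1) * sd / (29 * st) \<le> Dl" using st sd by (simp add: field_simps)
  then have "(real d - 1) * sd / (29 * st) * st\<^sup>2 \<le> Dl * st\<^sup>2" using st by (intro mult_right_mono) auto
  moreover have "(real d - 1) * sd / (29 * st) * st\<^sup>2 = (real d - 1) * st * sd / 29"
    using st(1) by (simp add: power2_eq_square field_simps)
  ultimately have "(real d - 1) * st * sd / 29 \<le> Dl * st\<^sup>2" by linarith
  then have "(real d - 1) * st * sd / 29 \<le> Dl * real T" by (simp only: st(2))
  then show ?thesis unfolding st_def sd_def .
qed

lemma main_num:
  "\<gamma> / (3375 * (1 - \<gamma>) powr (3/2)) * real d * sqrt (real T) - \<gamma> / (1 - \<gamma>)\<^sup>2 \<le> BND"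
proof -
  define st where "st = sqrt (real T)"
  define sd where "sd = sqrt dl"
  have st: "st > 0" using T_pos by (auto simp: st_def)
  have sd: "sd > 0" "sd\<^sup>2 = dl" using dl_pos by (auto simp: sd_def)
  have pw: "(1 - \<gamma>) powr (3/2) = sd ^ 3"
  proof -
    have "dl powr (3/2) = dl powr (1 + 1/2)" by simp
    also have "\<dots> = dl * dl powr (1/2)" using dl_pos by (simp only: powr_add) simp
    also have "\<dots> = sd\<^sup>2 * sd" using dl_pos sd by (simp add: powr_half_sqrt sd_def)
    finally show ?thesis by (simp add: dl_def power2_eq_square power3_eq_cube)
  qed
  have dl4: "dl\<^sup>2 = sd ^ 4" using sd by (simp flip: sd(2) add: power2_eq_square power4_eq_xxxx)
  have "\<gamma> * (Dl * real T) / (20 * dl\<^sup>2) \<ge> \<gamma> * ((real d - 1) * st * sd / 29) / (20 * dl\<^sup>2)"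
    using main_num2 g1 dl_pos unfolding st_def sd_def by (intro divide_right_mono mult_left_mono) auto
  also have "\<gamma> * ((real d - 1) * st * sd / 29) / (20 * dl\<^sup>2) = (real d - 1) / 580 * (\<gamma> * st / sd ^ 3)"
    unfolding dl4 using sd by (simp add: field_simps power4_eq_xxxx power3_eq_cube)
  finally have a: "(real d - 1) / 580 * (\<gamma> * st / sd ^ 3) \<le> (A0 / dl) * ((real d - 1) * (real T / 10))"
    using main_num1 by linarith
  have "real d / 3375 \<le> (real d - 1) / 580" using d2 by simp
  then have "real d / 3375 * (\<gamma> * st / sd ^ 3) \<le> (real d - 1) / 580 * (\<gamma> * st / sd ^ 3)"
    using g1 st sd by (intro mult_right_mono) auto
  moreover have "\<gamma> / (3375 * (1 - \<gamma>) powr (3/2)) * real d * sqrt (real T) = real d / 3375 * (\<gamma> * st / sd ^ 3)"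
    unfolding pw st_def by simp
  ultimately show ?thesis using a unfolding BND_def dl_def by linarith
qed


lemma alpha_sq: "(alpha d \<gamma> T)\<^sup>2 = Db / ((real d - 1) * (1 + Db))"
  unfolding alpha_def Db_def[symmetric] using Db_pos dm1 by simp
lemma beta_sq: "(beta d \<gamma> T)\<^sup>2 = 1 / (1 + Db)"
  unfolding beta_def Db_def[symmetric] using Db_pos by simp

lemma aux_m: "(m::real) > 0 \<Longrightarrow> D > 0 \<Longrightarrow> m * ((D/m)\<^sup>2 / (D/(m*(1+D)))) = D*(1+D)"
proof -
  assume m: "m > 0" and D: "D > 0"
  have "1 + D \<noteq> 0" using D by simp
  then show ?thesis using m D by (simp add: power2_eq_square field_simps)
qed

lemma Ltheta_eq: assumes th: "\<theta> \<in> Theta d \<gamma> T" shows "Ltheta d \<gamma> T \<theta> = 1 + Db"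
proof -
  let ?a = "alpha d \<gamma> T" and ?b = "beta d \<gamma> T"
  have "(\<Sum>i<d. (thetabar d \<gamma> T \<theta> i)\<^sup>2) = (\<Sum>i<d-1. eta\<^sup>2 / ?a\<^sup>2) + 1 / ?b\<^sup>2"
    unfolding sum_d
  proof (rule arg_cong2[where f="(+)"])
    show "(\<Sum>i<d-1. (thetabar d \<gamma> T \<theta> i)\<^sup>2) = (\<Sum>i<d-1. eta\<^sup>2 / ?a\<^sup>2)"
    proof (rule sum.cong[OF refl])
      fix i assume "i \<in> {..<d-1}"
      then have i: "i < d - 1" by simp
      have "(sg \<theta> i)\<^sup>2 = 1" by (simp add: sg_def)
      then show "(thetabar d \<gamma> T \<theta> i)\<^sup>2 = eta\<^sup>2 / ?a\<^sup>2"
        using i Theta_i[OF th i] by (simp add: thetabar_def power_divide power_mult_distrib)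
    qed
    show "(thetabar d \<gamma> T \<theta> (d - 1))\<^sup>2 = 1 / ?b\<^sup>2" by (simp add: thetabar_def power_divide)
  qed
  also have "\<dots> = (real d - 1) * (eta\<^sup>2 / ?a\<^sup>2) + (1 + Db)"
    using d2 by (simp add: beta_sq of_nat_diff)
  also have "(real d - 1) * (eta\<^sup>2 / ?a\<^sup>2) = Db * (1 + Db)"
    unfolding alpha_sq eta_def using aux_m[of "real d - 1" Db] dm1 Db_pos by simp
  also have "Db * (1 + Db) + (1 + Db) = (1 + Db)\<^sup>2" by (simp add: power2_eq_square algebra_simps)
  finally show ?thesis unfolding Ltheta_def vnorm_def using Db_pos by simp
qed

lemma Ltheta_le: "\<theta> \<in> Theta d \<gamma> T \<Longrightarrow> Ltheta d \<gamma> T \<theta> \<le> 100/99"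
  using Ltheta_eq Db_small by simp

lemma vnorm_le: "(\<Sum>i<d. (v i)\<^sup>2) \<le> B\<^sup>2 \<Longrightarrow> 0 \<le> B \<Longrightarrow> vnorm d v \<le> B"
  unfolding vnorm_def by (metis real_sqrt_abs real_sqrt_le_mono abs_of_nonneg)

lemma LL_nonneg: "0 \<le> LL"
proof -
  have "1 \<le> \<gamma> / dl" using g1 dl_le dl_pos by (simp add: le_divide_eq)
  then show ?thesis using exp_LL one_le_exp_iff[of LL] by simp
qed

lemma LL_eq: "ln (\<gamma> / (1 - \<gamma>)) = LL"
proof -
  have "1 / (1 - \<gamma>) - 1 = \<gamma> / (1 - \<gamma>)" using g2 by (simp add: field_simps)
  then show ?thesis by (simp add: LL_def)
qed

lemma phi_norm: assumes a: "a \<in> actions d" shows "vnorm d (phi d \<gamma> T s a s') \<le> 1 + LL"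
proof -
  let ?a = "alpha d \<gamma> T" and ?b = "beta d \<gamma> T"
  have LL: "0 \<le> LL" by (rule LL_nonneg)
  have bb: "?b\<^sup>2 \<le> 1" unfolding beta_sq using Db_pos by simp
  have c: "(?b * LL)\<^sup>2 \<le> LL\<^sup>2"
    using mult_right_mono[OF bb, of "LL\<^sup>2"] by (simp add: power_mult_distrib)
  have sq: "LL\<^sup>2 \<le> (1 + LL)\<^sup>2" using LL by (simp add: power2_eq_square algebra_simps)
  show ?thesis
  proof (rule vnorm_le)
    show "0 \<le> 1 + LL" using LL by simp
    show "(\<Sum>i<d. (phi d \<gamma> T s a s' i)\<^sup>2) \<le> (1 + LL)\<^sup>2"
    proof (cases s; cases s')
      assume "s" "s'"
      then have "(\<Sum>i<d. (phi d \<gamma> T s a s' i)\<^sup>2) = 0 + (?b * LL)\<^sup>2"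
        unfolding sum_d by (simp add: phi_def LL_def Let_def)
      then show ?thesis using c sq by simp
    next
      assume "s" "\<not> s'" then show ?thesis by (simp add: phi_def)
    next
      assume "\<not> s" "s'" then show ?thesis by (simp add: phi_def)
    next
      assume ns: "\<not> s" "\<not> s'"
      have "(\<Sum>i<d. (phi d \<gamma> T s a s' i)\<^sup>2) = (\<Sum>i<d-1. ?a\<^sup>2) + (?b * LL)\<^sup>2"
        unfolding sum_d
      proof (rule arg_cong2[where f="(+)"])
        show "(\<Sum>i<d-1. (phi d \<gamma> T s a s' i)\<^sup>2) = (\<Sum>i<d-1. ?a\<^sup>2)"
        proof (rule sum.cong[OF refl])
          fix i assume "i \<in> {..<d-1}"
          then have i: "i < d - 1" by simp
          then have "a i = 1 \<or> a i = -1" using a by (auto simp: actions_def)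
          then show "(phi d \<gamma> T s a s' i)\<^sup>2 = ?a\<^sup>2" using ns i by (auto simp: phi_def power_mult_distrib)
        qed
        show "(phi d \<gamma> T s a s' (d - 1))\<^sup>2 = (?b * LL)\<^sup>2" using ns by (simp add: phi_def LL_def Let_def)
      qed
      also have "\<dots> = Db / (1 + Db) + LL\<^sup>2 / (1 + Db)"
        using d2 dm1 Db_pos by (simp add: alpha_sq beta_sq power_mult_distrib of_nat_diff)
      also have "\<dots> \<le> 1 + LL\<^sup>2"
      proof -
        have "Db / (1 + Db) \<le> 1" using Db_pos by simp
        moreover have "LL\<^sup>2 / (1 + Db) \<le> LL\<^sup>2" using Db_pos by (simp add: divide_le_eq mult_le_cancel_left1)
        ultimately show ?thesis by simp
      qed
      also have "\<dots> \<le> (1 + LL)\<^sup>2" using LL by (simp add: power2_eq_square algebra_simps)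
      finally show ?thesis .
    qed
  qed
qed

lemma Lphi_le: "Lphi d \<gamma> T \<le> 1 + ln (\<gamma> / (1 - \<gamma>))"
proof -
  let ?S = "(\<lambda>(s, a, s'). vnorm d (phi d \<gamma> T s a s')) ` (UNIV \<times> actions d \<times> UNIV)"
  have fin: "finite ?S" using finite_actions by simp
  have ne: "?S \<noteq> {}" using ast_act by blast
  have "\<forall>x\<in>?S. x \<le> 1 + LL" using phi_norm by auto
  then show ?thesis unfolding Lphi_def LL_eq using fin ne by simp
qed

end


theorem theorem10:
  fixes d T :: nat and \<gamma> :: real and \<pi> :: policy
  assumes "d \<ge> 2" and "\<gamma> \<ge> 100/101" and "\<gamma> < 1"
    and "real T \<ge> 45 * (real d - 1)\<^sup>2 / (1 - \<gamma>)"
    and "valid_policy d \<pi>"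
  shows "\<exists>\<theta>\<in>Theta d \<gamma> T.
           Ltheta d \<gamma> T \<theta> \<le> 100/99
         \<and> Lphi d \<gamma> T \<le> 1 + ln (\<gamma> / (1 - \<gamma>))
         \<and> expected_regret d (trans_M d \<gamma> T \<theta>) \<gamma> \<pi> False T
             \<ge> \<gamma> / (3375 * (1 - \<gamma>) powr (3/2)) * real d * sqrt (real T) - \<gamma> / (1 - \<gamma>)\<^sup>2"
proof -
  interpret M: model d T \<gamma> using assms(1-4) by unfold_locales
  obtain \<theta> where th: "\<theta> \<in> Theta d \<gamma> T" and r: "M.BND \<le> expected_regret d (trans_M d \<gamma> T \<theta>) \<gamma> \<pi> False T"
    using M.exists_theta[OF assms(5)] by blast
  show ?thesis
    using th M.Ltheta_le[OF th] M.Lphi_le M.main_num r by (intro bexI[of _ \<theta>]) auto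
qed


end
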